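(* Fix $\bar y\in\mathbb{R}$ and assume Assumption A and Assumption C at $\bar y$. Then for any $0<T<\infty$, $$\lim_{n\to\infty}\sup_{0\le t\le T}n^{-1/4}\big|EY_{n,1}(t)-EY_{n,2}(t)\big|=0,$$ i.e. $\sup_{0\le t\le T}n^{-1/4}|EY_n(t)|\to0$ where $Y_n=Y_{n,1}-Y_{n,2}$.
   Context: Setting (independent random walk height model). Let $p=\{p(x):x\in\mathbb{Z}\}$ be a probability kernel on $\mathbb{Z}$. Assumption A: for some $\delta>0$, $\sum_{x}e^{\theta x}p(x)<\infty$ for $|\theta|\le\delta$. Set $b=\sum_x xp(x)$. A "random walk" is a continuous-time random walk on $\mathbb{Z}$ that jumps at rate 1 with increments distributed according to $p$. For each $n\in\mathbb{N}$ nonnegative integer initial occupation variables $\eta^n_0(x)$, $x\in\mathbb{Z}$, are given; place $\eta^n_0(x)$ particles at each site $x$ at time $0$ and let them evolve as independent random walks, independent of the initial occupation variables; write $X^n_i(\cdot)$ for the particle paths. $[\cdot]$ denotes the integer part. Define $Y_{n,1}(t)=\#\{i:X^n_i(0)\ge[n\bar y]+1,\ X^n_i(nt)\le[n\bar y]+[nbt]\}$ and $Y_{n,2}(t)=\#\{i:X^n_i(0)\le[n\bar y],\ X^n_i(nt)>[n\bar y]+[nbt]\}$. Assumption C at a point $\bar y\in\mathbb{R}$: for each $n$ the variables $\{\eta^n_0(x):x\in\mathbb{Z}\}$ are independent and $\sup_{n\in\mathbb{N},x\in\mathbb{Z}}E[\eta^n_0(x)^6]<\infty$; write $\rho^n_0(x)=E\eta^n_0(x)$,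 $v^n_0(x)=\mathrm{Var}[\eta^n_0(x)]$. Bounded nonnegative functions $\rho_0,v_0$ on $\mathbb{R}$ are given, and there are positive integers $L=L(n)$ with $n^{-1/4}L(n)\to0$ such that for every finite $A$, $\lim_{n\to\infty}\sup_{|m|\le A\sqrt{n\log n}} n^{1/4}\big|L^{-1}\sum_{j=1}^{L}\rho^n_0([n\bar y]+m+j)-\rho_0(\bar y)\big|=0$, and the same holds with $\rho^n_0,\rho_0$ replaced by $v^n_0,v_0$. *)

theory Defs
  imports "HOL-Probability.Probability"
begin

definition step_sum_pmf :: "int pmf \<Rightarrow> nat \<Rightarrow> int pmf" where
  "step_sum_pmf p j =
     ((\<lambda>q. bind_pmf q (\<lambda>s. map_pmf (\<lambda>z. s + z) p)) ^^ j) (return_pmf 0)"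

text \<open>Law of the displacement at time t of a continuous-time random walk jumping
  at rate 1 with increments distributed according to p (compound Poisson law).\<close>
definition crw_pmf :: "int pmf \<Rightarrow> real \<Rightarrow> int pmf" where
  "crw_pmf p t = (if t \<le> 0 then return_pmf 0
                  else bind_pmf (poisson_pmf t) (step_sum_pmf p))"

definition is_crw :: "'a measure \<Rightarrow> int pmf \<Rightarrow> int \<Rightarrow> ('a \<Rightarrow> real \<Rightarrow> int) \<Rightarrow> bool" where
  "is_crw M p x X \<longleftrightarrow>
     (\<forall>\<omega>\<in>space M. X \<omega> 0 = x) \<and>
     (\<forall>ts::real list. sorted ts \<and> (\<forall>t\<in>set ts. 0 \<le> t) \<longrightarrow>
        prob_space.indep_vars M (\<lambda>_. count_space UNIV)
          (\<lambda>i \<omega>. X \<omega> (ts ! Suc i) - X \<omega> (ts ! i)) {..<length ts - 1} \<and>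
        (\<forall>i < length ts - 1.
           distr M (count_space UNIV) (\<lambda>\<omega>. X \<omega> (ts ! Suc i) - X \<omega> (ts ! i))
             = measure_pmf (crw_pmf p (ts ! Suc i - ts ! i))))"

text \<open>Joint independence of the occupation variables eta x (x \<in> Z) and the
  particle paths X x i (x \<in> Z, i \<in> N), where X x i is the path of the i-th particle
  initially at x (only used when i < eta x); paths are random elements of the
  product space of functions real \<Rightarrow> int.\<close>
definition system_indep ::
  "'a measure \<Rightarrow> (int \<Rightarrow> 'a \<Rightarrow> nat) \<Rightarrow> (int \<Rightarrow> nat \<Rightarrow> 'a \<Rightarrow> real \<Rightarrow> int) \<Rightarrow> bool" where
  "system_indep M eta X \<longleftrightarrow>
     (\<forall>x. eta x \<in> measurable M (count_space UNIV)) \<and>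
     (\<forall>x i. X x i \<in> measurable M (PiM UNIV (\<lambda>_::real. count_space (UNIV::int set)))) \<and>
     prob_space.indep_sets M
       (\<lambda>k. case k of
              Inl x \<Rightarrow> {eta x -` A \<inter> space M | A. A \<in> sets (count_space (UNIV::nat set))}
            | Inr (x, i) \<Rightarrow> {X x i -` A \<inter> space M | A.
                 A \<in> sets (PiM UNIV (\<lambda>_::real. count_space (UNIV::int set)))})
       UNIV"

definition particle_count ::
  "(int \<Rightarrow> 'a \<Rightarrow> nat) \<Rightarrow> (int \<Rightarrow> nat \<Rightarrow> 'a \<Rightarrow> real \<Rightarrow> int) \<Rightarrow> (int \<Rightarrow> int \<Rightarrow> bool)
     \<Rightarrow> real \<Rightarrow> 'a \<Rightarrow> ennreal" where
  "particle_count eta X P s \<omega> =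
     emeasure (count_space UNIV) {(x, i). i < eta x \<omega> \<and> P (X x i \<omega> 0) (X x i \<omega> s)}"

definition Y1 :: "(int \<Rightarrow> 'a \<Rightarrow> nat) \<Rightarrow> (int \<Rightarrow> nat \<Rightarrow> 'a \<Rightarrow> real \<Rightarrow> int) \<Rightarrow> real \<Rightarrow> real
     \<Rightarrow> nat \<Rightarrow> real \<Rightarrow> 'a \<Rightarrow> ennreal" where
  "Y1 eta X b ybar n t = particle_count eta X
     (\<lambda>a c. a \<ge> \<lfloor>real n * ybar\<rfloor> + 1 \<and> c \<le> \<lfloor>real n * ybar\<rfloor> + \<lfloor>real n * b * t\<rfloor>)
     (real n * t)"

definition Y2 :: "(int \<Rightarrow> 'a \<Rightarrow> nat) \<Rightarrow> (int \<Rightarrow> nat \<Rightarrow> 'a \<Rightarrow> real \<Rightarrow> int) \<Rightarrow> real \<Rightarrow> real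
     \<Rightarrow> nat \<Rightarrow> real \<Rightarrow> 'a \<Rightarrow> ennreal" where
  "Y2 eta X b ybar n t = particle_count eta X
     (\<lambda>a c. a \<le> \<lfloor>real n * ybar\<rfloor> \<and> c > \<lfloor>real n * ybar\<rfloor> + \<lfloor>real n * b * t\<rfloor>)
     (real n * t)"

end

theory Submission
  imports Defs
begin


lemma exp_series_tail:
  fixes y :: real
  shows "summable (\<lambda>n. y ^ (n + 2) / fact (n + 2))"
    and "exp y = 1 + y + (\<Sum>n. y ^ (n + 2) / fact (n + 2))"
proof -
  have "summable (\<lambda>n. y ^ n /\<^sub>R fact n)" by (rule summable_exp_generic)
  then have "summable (\<lambda>n. y ^ (n + 2) /\<^sub>R fact (n + 2))"
    by (rule summable_ignore_initial_segment)
  then show "summable (\<lambda>n. y ^ (n + 2) / fact (n + 2))" by (simp add: divide_inverse_commute)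
  show "exp y = 1 + y + (\<Sum>n. y ^ (n + 2) / fact (n + 2))"
    using exp_first_two_terms[of y] by (simp add: divide_inverse_commute)
qed

lemma exp_ge_sq_half: assumes "(0::real) \<le> z" shows "z\<^sup>2 / 2 \<le> exp z"
proof -
  have "(\<Sum>n\<in>{0}. z ^ (n + 2) / fact (n + 2)) \<le> (\<Sum>n. z ^ (n + 2) / fact (n + 2))"
    by (rule sum_le_suminf[OF exp_series_tail(1)]) (use assms in auto)
  then have "z\<^sup>2 / 2 \<le> (\<Sum>n. z ^ (n + 2) / fact (n + 2))" by (simp add: numeral_eq_Suc)
  then show ?thesis using exp_series_tail(2)[of z] assms by linarith
qed

lemma exp_taylor2_bound: fixes y :: real shows "exp y - 1 - y \<le> y\<^sup>2 * exp \<bar>y\<bar>"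
proof -
  have s2: "summable (\<lambda>n. y\<^sup>2 * (\<bar>y\<bar> ^ n / fact n))"
    using summable_exp_generic[of "\<bar>y\<bar>"] by (intro summable_mult) (simp add: divide_inverse_commute)
  have le: "y ^ (n + 2) / fact (n + 2) \<le> y\<^sup>2 * (\<bar>y\<bar> ^ n / fact n)" for n
  proof -
    have "y ^ (n + 2) \<le> \<bar>y\<bar> ^ (n + 2)" by (metis abs_ge_self power_abs)
    also have "\<bar>y\<bar> ^ (n + 2) = y\<^sup>2 * \<bar>y\<bar> ^ n" by (simp add: power_add power2_eq_square)
    finally have a: "y ^ (n + 2) \<le> y\<^sup>2 * \<bar>y\<bar> ^ n" .
    have f: "fact n \<le> (fact (n + 2) :: real)" by (intro fact_mono) auto
    have "y ^ (n + 2) / fact (n + 2) \<le> y\<^sup>2 * \<bar>y\<bar> ^ n / fact (n + 2)"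
      using a by (intro divide_right_mono) auto
    also have "\<dots> \<le> y\<^sup>2 * \<bar>y\<bar> ^ n / fact n"
      by (intro divide_left_mono f) auto
    finally show ?thesis by simp
  qed
  have "(\<Sum>n. y ^ (n + 2) / fact (n + 2)) \<le> (\<Sum>n. y\<^sup>2 * (\<bar>y\<bar> ^ n / fact n))"
    by (rule suminf_le[OF le exp_series_tail(1) s2])
  also have "\<dots> = y\<^sup>2 * (\<Sum>n. \<bar>y\<bar> ^ n / fact n)"
    by (rule suminf_mult) (use summable_exp_generic[of "\<bar>y\<bar>"] in \<open>simp add: divide_inverse_commute\<close>)
  also have "(\<Sum>n. \<bar>y\<bar> ^ n / fact n) = exp \<bar>y\<bar>"
    by (simp add: exp_def divide_inverse_commute)
  finally show ?thesis using exp_series_tail(2)[of y] by linarith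
qed


lemma crw_event:
  assumes "prob_space M" "is_crw M p x Xp" "0 \<le> s"
    and meas: "Xp \<in> measurable M (PiM UNIV (\<lambda>_::real. count_space (UNIV::int set)))"
  shows "emeasure M {\<omega>\<in>space M. Q (Xp \<omega> s)} = emeasure (measure_pmf (crw_pmf p s)) {d. Q (x + d)}"
proof -
  have m1: "(\<lambda>\<omega>. Xp \<omega> s) \<in> measurable M (count_space UNIV)"
    using measurable_compose[OF meas measurable_component_singleton[of s UNIV]] by simp
  have m00: "(\<lambda>\<omega>. Xp \<omega> 0) \<in> measurable M (count_space UNIV)"
    using measurable_compose[OF meas measurable_component_singleton[of 0 UNIV]] by simp
  have m0: "(\<lambda>\<omega>. Xp \<omega> s - Xp \<omega> 0) \<in> measurable M (count_space UNIV)"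
    using measurable_compose_countable[where f="\<lambda>i \<omega>. i - Xp \<omega> 0" and g="\<lambda>\<omega>. Xp \<omega> s", OF _ m1]
      measurable_compose[OF m00, of "\<lambda>c. _ - c"] by auto
  have x0: "\<And>\<omega>. \<omega> \<in> space M \<Longrightarrow> Xp \<omega> 0 = x" using assms(2) unfolding is_crw_def by auto
  have "distr M (count_space UNIV) (\<lambda>\<omega>. Xp \<omega> ([0,s] ! Suc 0) - Xp \<omega> ([0,s] ! 0))
      = measure_pmf (crw_pmf p ([0,s] ! Suc 0 - [0,s] ! 0))"
    using assms(2,3) unfolding is_crw_def by (auto dest!: spec[of _ "[0,s]"])
  hence D: "distr M (count_space UNIV) (\<lambda>\<omega>. Xp \<omega> s - Xp \<omega> 0) = measure_pmf (crw_pmf p s)" by simp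
  have "emeasure (measure_pmf (crw_pmf p s)) {d. Q (x + d)}
      = emeasure (distr M (count_space UNIV) (\<lambda>\<omega>. Xp \<omega> s - Xp \<omega> 0)) {d. Q (x + d)}"
    using D by simp
  also have "\<dots> = emeasure M ((\<lambda>\<omega>. Xp \<omega> s - Xp \<omega> 0) -` {d. Q (x + d)} \<inter> space M)"
    by (rule emeasure_distr[OF m0]) simp
  also have "(\<lambda>\<omega>. Xp \<omega> s - Xp \<omega> 0) -` {d. Q (x + d)} \<inter> space M = {\<omega>\<in>space M. Q (Xp \<omega> s)}"
    using x0 by auto
  finally show ?thesis by simp
qed


lemma of_nat_as_nn: "ennreal (of_nat e) = (\<integral>\<^sup>+ i. indicator {i::nat. i < e} i \<partial>count_space UNIV)"
  by (simp add: emeasure_count_space_finite ennreal_of_nat_eq_real_of_nat)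

lemma expected_count:
  assumes P: "prob_space M" and W: "\<And>x i. is_crw M p x (X x i)" and I: "system_indep M eta X"
    and s: "0 \<le> s"
  shows "(\<integral>\<^sup>+\<omega>. particle_count eta X Q s \<omega> \<partial>M) =
    (\<integral>\<^sup>+ d. \<integral>\<^sup>+ x. (\<integral>\<^sup>+\<omega>. ennreal (of_nat (eta x \<omega>)) \<partial>M) * indicator {x. Q x (x + d)} x
       \<partial>count_space UNIV \<partial>measure_pmf (crw_pmf p s))"
proof -
  interpret prob_space M by fact
  have meta[measurable]: "\<And>x. eta x \<in> measurable M (count_space UNIV)" using I unfolding system_indep_def by auto
  have mX: "\<And>x i. X x i \<in> measurable M (PiM UNIV (\<lambda>_::real. count_space (UNIV::int set)))"
    using I unfolding system_indep_def by auto
  have ind: "indep_sets (\<lambda>k. case k of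
              Inl x \<Rightarrow> {eta x -` A \<inter> space M | A. A \<in> sets (count_space (UNIV::nat set))}
            | Inr (x, i) \<Rightarrow> {X x i -` A \<inter> space M | A.
                 A \<in> sets (PiM UNIV (\<lambda>_::real. count_space (UNIV::int set)))}) UNIV"
    using I[unfolded system_indep_def] by (rule conjunct2[OF conjunct2])
  have x0: "\<And>x i \<omega>. \<omega> \<in> space M \<Longrightarrow> X x i \<omega> 0 = x" using W unfolding is_crw_def by auto
  have mXs: "\<And>x i. (\<lambda>\<omega>. X x i \<omega> s) \<in> measurable M (count_space UNIV)"
    using measurable_compose[OF mX measurable_component_singleton[of s UNIV]] by simp
  define E1 where "E1 x i = {\<omega>\<in>space M. i < eta x \<omega>}" for x i
  define E2 where "E2 x i = {\<omega>\<in>space M. Q x (X x i \<omega> s)}" for x i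
  have E1s: "E1 x i \<in> sets M" for x i unfolding E1_def by measurable
  have E2s: "E2 x i \<in> sets M" for x i unfolding E2_def using mXs[of x i] by measurable
  let ?pc = "\<lambda>\<omega>. \<integral>\<^sup>+ z. indicator (E1 (fst z) (snd z) \<inter> E2 (fst z) (snd z)) \<omega> \<partial>count_space (UNIV :: (int \<times> nat) set)"
  have step1: "(\<integral>\<^sup>+\<omega>. particle_count eta X Q s \<omega> \<partial>M) = (\<integral>\<^sup>+\<omega>. ?pc \<omega> \<partial>M)"
  proof (rule nn_integral_cong)
    fix \<omega> assume \<omega>: "\<omega> \<in> space M"
    have "particle_count eta X Q s \<omega> = emeasure (count_space UNIV) {(x, i). i < eta x \<omega> \<and> Q (X x i \<omega> 0) (X x i \<omega> s)}"
      unfolding particle_count_def ..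
    also have "\<dots> = (\<integral>\<^sup>+ z. indicator {(x, i). i < eta x \<omega> \<and> Q (X x i \<omega> 0) (X x i \<omega> s)} z \<partial>count_space UNIV)"
      by (rule nn_integral_indicator[symmetric]) simp
    also have "\<dots> = ?pc \<omega>"
      by (rule nn_integral_cong) (auto simp: E1_def E2_def x0 \<omega> split: split_indicator)
    finally show "particle_count eta X Q s \<omega> = ?pc \<omega>" .
  qed
  also have "\<dots> = (\<integral>\<^sup>+ z. \<integral>\<^sup>+\<omega>. indicator (E1 (fst z) (snd z) \<inter> E2 (fst z) (snd z)) \<omega> \<partial>M \<partial>count_space UNIV)"
    by (rule nn_integral_count_space_nn_integral) (auto intro!: borel_measurable_indicator E1s E2s)
  also have "\<dots> = (\<integral>\<^sup>+ z. emeasure M (E1 (fst z) (snd z)) * emeasure (measure_pmf (crw_pmf p s)) {d. Q (fst z) (fst z + d)} \<partial>count_space UNIV)"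
  proof (rule nn_integral_cong)
    fix z :: "int \<times> nat"
    obtain x i where z: "z = (x, i)" by (cases z)
    have "(\<integral>\<^sup>+\<omega>. indicator (E1 x i \<inter> E2 x i) \<omega> \<partial>M) = emeasure M (E1 x i \<inter> E2 x i)"
      using E1s E2s by (intro nn_integral_indicator) auto
    also have "\<dots> = ennreal (prob (E1 x i \<inter> E2 x i))" using emeasure_eq_measure by blast
    also have "prob (E1 x i \<inter> E2 x i) = prob (E1 x i) * prob (E2 x i)"
    proof -
      let ?J = "{Inl x, Inr (x, i)} :: (int + int \<times> nat) set"
      let ?A = "\<lambda>k::int + int \<times> nat. case k of Inl _ \<Rightarrow> E1 x i | Inr _ \<Rightarrow> E2 x i"
      have A1: "E1 x i = eta x -` {i<..} \<inter> space M" unfolding E1_def by auto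
      define B where "B = {f \<in> space (PiM UNIV (\<lambda>_::real. count_space (UNIV::int set))). Q x (f s)}"
      have setB: "B \<in> sets (PiM UNIV (\<lambda>_::real. count_space (UNIV::int set)))"
        unfolding B_def using measurable_component_singleton[of s UNIV "\<lambda>_::real. count_space (UNIV::int set)"]
        by measurable
      have A2: "E2 x i = X x i -` B \<inter> space M"
        unfolding E2_def B_def using measurable_space[OF mX[of x i]] by auto
      have "prob (\<Inter>j\<in>?J. ?A j) = (\<Prod>j\<in>?J. prob (?A j))"
        apply (rule indep_setsD[OF ind])
        apply simp_all
        using A1 A2 setB by blast
      then show ?thesis by simp
    qed
    also have "ennreal (prob (E1 x i) * prob (E2 x i)) = emeasure M (E1 x i) * emeasure M (E2 x i)"
      by (simp add: emeasure_eq_measure ennreal_mult)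
    also have "emeasure M (E2 x i) = emeasure (measure_pmf (crw_pmf p s)) {d. Q x (x + d)}"
      unfolding E2_def by (rule crw_event[OF P W s mX])
    finally show "(\<integral>\<^sup>+\<omega>. indicator (E1 (fst z) (snd z) \<inter> E2 (fst z) (snd z)) \<omega> \<partial>M) =
       emeasure M (E1 (fst z) (snd z)) * emeasure (measure_pmf (crw_pmf p s)) {d. Q (fst z) (fst z + d)}"
      by (simp add: z)
  qed
  also have "\<dots> = (\<integral>\<^sup>+ x. \<integral>\<^sup>+ i. emeasure M (E1 x i) * emeasure (measure_pmf (crw_pmf p s)) {d. Q x (x + d)} \<partial>count_space UNIV \<partial>count_space UNIV)"
    by (rule nn_integral_fst_count_space[symmetric, where f="\<lambda>z. emeasure M (E1 (fst z) (snd z)) * emeasure (measure_pmf (crw_pmf p s)) {d. Q (fst z) (fst z + d)}", simplified])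
  also have "\<dots> = (\<integral>\<^sup>+ x. (\<integral>\<^sup>+\<omega>. ennreal (of_nat (eta x \<omega>)) \<partial>M) * emeasure (measure_pmf (crw_pmf p s)) {d. Q x (x + d)} \<partial>count_space UNIV)"
  proof (rule nn_integral_cong)
    fix x
    have "(\<integral>\<^sup>+ i. emeasure M (E1 x i) \<partial>count_space UNIV) = (\<integral>\<^sup>+ i. \<integral>\<^sup>+\<omega>. indicator {i. i < eta x \<omega>} i \<partial>M \<partial>count_space UNIV)"
      by (rule nn_integral_cong) (auto simp: E1_def intro!: nn_integral_indicator[symmetric, THEN trans] nn_integral_cong split: split_indicator intro: E1s[unfolded E1_def])
    also have "\<dots> = (\<integral>\<^sup>+\<omega>. \<integral>\<^sup>+ i. indicator {i. i < eta x \<omega>} i \<partial>count_space UNIV \<partial>M)"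
      by (rule nn_integral_count_space_nn_integral[symmetric]) auto
    also have "\<dots> = (\<integral>\<^sup>+\<omega>. ennreal (of_nat (eta x \<omega>)) \<partial>M)"
      by (simp add: of_nat_as_nn)
    finally show "(\<integral>\<^sup>+ i. emeasure M (E1 x i) * emeasure (measure_pmf (crw_pmf p s)) {d. Q x (x + d)} \<partial>count_space UNIV)
       = (\<integral>\<^sup>+\<omega>. ennreal (of_nat (eta x \<omega>)) \<partial>M) * emeasure (measure_pmf (crw_pmf p s)) {d. Q x (x + d)}"
      by (simp add: nn_integral_multc)
  qed
  also have "\<dots> = (\<integral>\<^sup>+ x. \<integral>\<^sup>+ d. (\<integral>\<^sup>+\<omega>. ennreal (of_nat (eta x \<omega>)) \<partial>M) * indicator {x. Q x (x + d)} x \<partial>measure_pmf (crw_pmf p s) \<partial>count_space UNIV)"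
  proof (rule nn_integral_cong)
    fix x
    let ?c = "\<integral>\<^sup>+\<omega>. ennreal (of_nat (eta x \<omega>)) \<partial>M"
    have "(\<integral>\<^sup>+ d. ?c * indicator {x. Q x (x + d)} x \<partial>measure_pmf (crw_pmf p s))
        = (\<integral>\<^sup>+ d. ?c * indicator {d. Q x (x + d)} d \<partial>measure_pmf (crw_pmf p s))"
      by (rule nn_integral_cong) (auto split: split_indicator)
    also have "\<dots> = ?c * emeasure (measure_pmf (crw_pmf p s)) {d. Q x (x + d)}"
      by (subst nn_integral_cmult) auto
    finally show "?c * emeasure (measure_pmf (crw_pmf p s)) {d. Q x (x + d)} =
       (\<integral>\<^sup>+ d. ?c * indicator {x. Q x (x + d)} x \<partial>measure_pmf (crw_pmf p s))" by simp
  qed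
  also have "\<dots> = (\<integral>\<^sup>+ d. \<integral>\<^sup>+ x. (\<integral>\<^sup>+\<omega>. ennreal (of_nat (eta x \<omega>)) \<partial>M) * indicator {x. Q x (x + d)} x \<partial>count_space UNIV \<partial>measure_pmf (crw_pmf p s))"
    by (rule nn_integral_count_space_nn_integral[symmetric]) auto
  finally show ?thesis .
qed


context
  fixes p :: "int pmf" and \<delta> :: real
  assumes dpos: "\<delta> > 0"
    and mgf: "\<And>\<theta>. \<bar>\<theta>\<bar> \<le> \<delta> \<Longrightarrow> (\<lambda>x. exp (\<theta> * real_of_int x) * pmf p x) summable_on UNIV"
begin

lemma mgf_integrable: assumes "\<bar>\<theta>\<bar> \<le> \<delta>"
  shows "integrable (measure_pmf p) (\<lambda>x. exp (\<theta> * real_of_int x))"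
proof -
  have s: "(\<lambda>x. norm (exp (\<theta> * real_of_int x) * pmf p x)) summable_on UNIV"
    using mgf[OF assms] by (simp add: abs_mult)
  then have a: "Infinite_Set_Sum.abs_summable_on (\<lambda>x. exp (\<theta> * real_of_int x) * pmf p x) UNIV"
    using abs_summable_equivalent by blast
  have "(\<integral>\<^sup>+x. ennreal (exp (\<theta> * real_of_int x)) \<partial>measure_pmf p)
      = (\<integral>\<^sup>+x. ennreal (exp (\<theta> * real_of_int x) * pmf p x) \<partial>count_space UNIV)"
    by (simp add: nn_integral_measure_pmf ennreal_mult' mult.commute)
  also have "\<dots> = ennreal (infsetsum (\<lambda>x. exp (\<theta> * real_of_int x) * pmf p x) UNIV)"
    by (rule nn_integral_conv_infsetsum[OF a]) simp
  finally have "(\<integral>\<^sup>+x. ennreal (norm (exp (\<theta> * real_of_int x))) \<partial>measure_pmf p) < \<infinity>" by simp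
  then show ?thesis by (intro integrableI_bounded) auto
qed

lemma dom_integrable:
  fixes f :: "int \<Rightarrow> real"
  assumes "\<And>x. \<bar>f x\<bar> \<le> C * (exp (\<delta> * real_of_int x) + exp ((-\<delta>) * real_of_int x))"
  shows "integrable (measure_pmf p) f"
proof (rule Bochner_Integration.integrable_bound)
  show "integrable (measure_pmf p) (\<lambda>x. C * (exp (\<delta> * real_of_int x) + exp ((-\<delta>) * real_of_int x)))"
    using mgf_integrable[of \<delta>] mgf_integrable[of "-\<delta>"] dpos by auto
  show "AE x in measure_pmf p. norm (f x) \<le> norm (C * (exp (\<delta> * real_of_int x) + exp ((-\<delta>) * real_of_int x)))"
    using assms by (auto intro: order.trans[OF _ abs_ge_self])
qed simp

lemma abs_le_exp: "\<bar>real_of_int x\<bar> \<le> (1/\<delta>) * (exp (\<delta> * real_of_int x) + exp ((-\<delta>) * real_of_int x))"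
proof -
  have "\<delta> * \<bar>real_of_int x\<bar> \<le> exp (\<delta> * \<bar>real_of_int x\<bar>)"
    using exp_ge_add_one_self[of "\<delta> * \<bar>real_of_int x\<bar>"] by linarith
  also have "\<dots> \<le> exp (\<delta> * real_of_int x) + exp ((-\<delta>) * real_of_int x)"
    by (cases "x \<ge> 0") auto
  finally show ?thesis using dpos by (simp add: field_simps)
qed

lemma mean_integrable: "integrable (measure_pmf p) real_of_int"
  by (rule dom_integrable[of _ "1/\<delta>"]) (use abs_le_exp in auto)

definition "Kp = measure_pmf.expectation p (\<lambda>x. (real_of_int x)\<^sup>2 * exp (\<delta> / 2 * \<bar>real_of_int x\<bar>))"

lemma sq_exp_bound:
  "(real_of_int x)\<^sup>2 * exp (\<delta> / 2 * \<bar>real_of_int x\<bar>) \<le> (8 / \<delta>\<^sup>2) * (exp (\<delta> * real_of_int x) + exp ((-\<delta>) * real_of_int x))"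
proof -
  let ?z = "\<delta> / 2 * \<bar>real_of_int x\<bar>"
  have "?z\<^sup>2 / 2 \<le> exp ?z" by (rule exp_ge_sq_half) (use dpos in auto)
  then have "(real_of_int x)\<^sup>2 \<le> (8 / \<delta>\<^sup>2) * exp ?z"
    using dpos by (simp add: field_simps power2_eq_square)
  then have "(real_of_int x)\<^sup>2 * exp ?z \<le> (8 / \<delta>\<^sup>2) * exp ?z * exp ?z"
    by (intro mult_right_mono) auto
  also have "(8 / \<delta>\<^sup>2) * exp ?z * exp ?z = (8 / \<delta>\<^sup>2) * exp (\<delta> * \<bar>real_of_int x\<bar>)"
    by (simp add: mult.assoc flip: exp_add)
  also have "\<dots> \<le> (8 / \<delta>\<^sup>2) * (exp (\<delta> * real_of_int x) + exp ((-\<delta>) * real_of_int x))"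
    by (intro mult_left_mono) (cases "x \<ge> 0", auto)
  finally show ?thesis .
qed

lemma Kp_integrable: "integrable (measure_pmf p) (\<lambda>x. (real_of_int x)\<^sup>2 * exp (\<delta> / 2 * \<bar>real_of_int x\<bar>))"
  by (rule dom_integrable[of _ "8 / \<delta>\<^sup>2"]) (use sq_exp_bound in auto)

lemma Kp_nonneg: "Kp \<ge> 0"
  unfolding Kp_def by (intro integral_nonneg_AE) auto

lemma phi_bound: assumes "\<bar>\<theta>\<bar> \<le> \<delta> / 2"
  shows "measure_pmf.expectation p (\<lambda>x. exp (\<theta> * real_of_int x))
      \<le> 1 + \<theta> * measure_pmf.expectation p real_of_int + \<theta>\<^sup>2 * Kp"
proof -
  have pw: "exp (\<theta> * real_of_int x) \<le> 1 + \<theta> * real_of_int x + \<theta>\<^sup>2 * ((real_of_int x)\<^sup>2 * exp (\<delta> / 2 * \<bar>real_of_int x\<bar>))" for x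
  proof -
    have "exp (\<theta> * real_of_int x) - 1 - \<theta> * real_of_int x \<le> (\<theta> * real_of_int x)\<^sup>2 * exp \<bar>\<theta> * real_of_int x\<bar>"
      by (rule exp_taylor2_bound)
    also have "\<dots> \<le> (\<theta> * real_of_int x)\<^sup>2 * exp (\<delta> / 2 * \<bar>real_of_int x\<bar>)"
    proof (intro mult_left_mono)
      have "\<bar>\<theta>\<bar> * \<bar>real_of_int x\<bar> \<le> \<delta> / 2 * \<bar>real_of_int x\<bar>"
        using assms by (intro mult_right_mono) auto
      then show "exp \<bar>\<theta> * real_of_int x\<bar> \<le> exp (\<delta> / 2 * \<bar>real_of_int x\<bar>)" by (simp add: abs_mult)
    qed simp
    finally show ?thesis by (simp add: power_mult_distrib algebra_simps)
  qed
  have i1: "integrable (measure_pmf p) (\<lambda>x. 1 + \<theta> * real_of_int x + \<theta>\<^sup>2 * ((real_of_int x)\<^sup>2 * exp (\<delta> / 2 * \<bar>real_of_int x\<bar>)))"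
    using mean_integrable Kp_integrable by auto
  have "measure_pmf.expectation p (\<lambda>x. exp (\<theta> * real_of_int x))
      \<le> measure_pmf.expectation p (\<lambda>x. 1 + \<theta> * real_of_int x + \<theta>\<^sup>2 * ((real_of_int x)\<^sup>2 * exp (\<delta> / 2 * \<bar>real_of_int x\<bar>)))"
    by (rule integral_mono[OF _ i1 pw]) (use mgf_integrable assms dpos in auto)
  also have "\<dots> = 1 + \<theta> * measure_pmf.expectation p real_of_int + \<theta>\<^sup>2 * Kp"
    unfolding Kp_def using mean_integrable Kp_integrable by simp
  finally show ?thesis .
qed

lemma b_eq: "(\<Sum>\<^sub>\<infinity>x\<in>UNIV. real_of_int x * pmf p x) = measure_pmf.expectation p real_of_int"
proof -
  have "measure_pmf.expectation p real_of_int = integral\<^sup>L (count_space UNIV) (\<lambda>x. pmf p x *\<^sub>R real_of_int x)"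
    unfolding measure_pmf_eq_density by (rule integral_density) auto
  also have "\<dots> = infsetsum (\<lambda>x. real_of_int x * pmf p x) UNIV"
    unfolding infsetsum_def by (simp add: mult.commute)
  also have "\<dots> = (\<Sum>\<^sub>\<infinity>x\<in>UNIV. real_of_int x * pmf p x)"
  proof (rule infsetsum_infsum)
    have "integrable (count_space UNIV) (\<lambda>x. pmf p x *\<^sub>R real_of_int x)"
      using mean_integrable unfolding measure_pmf_eq_density by (subst (asm) integrable_density) auto
    then show "Infinite_Set_Sum.abs_summable_on (\<lambda>x. real_of_int x * pmf p x) UNIV"
      unfolding abs_summable_on_def by (simp add: mult.commute)
  qed
  finally show ?thesis ..
qed

end


lemma step_mgf:
  "(\<integral>\<^sup>+d. ennreal (exp (\<theta> * real_of_int d)) \<partial>measure_pmf (step_sum_pmf p j))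
     = (\<integral>\<^sup>+x. ennreal (exp (\<theta> * real_of_int x)) \<partial>measure_pmf p) ^ j"
proof (induction j)
  case 0
  then show ?case by (simp add: step_sum_pmf_def)
next
  case (Suc j)
  have e: "step_sum_pmf p (Suc j) = bind_pmf (step_sum_pmf p j) (\<lambda>s. map_pmf (\<lambda>z. s + z) p)"
    by (simp add: step_sum_pmf_def)
  have "(\<integral>\<^sup>+d. ennreal (exp (\<theta> * real_of_int d)) \<partial>measure_pmf (step_sum_pmf p (Suc j)))
      = (\<integral>\<^sup>+s. \<integral>\<^sup>+z. ennreal (exp (\<theta> * real_of_int s)) * ennreal (exp (\<theta> * real_of_int z)) \<partial>measure_pmf p \<partial>measure_pmf (step_sum_pmf p j))"
    unfolding e by (simp add: distrib_left exp_add ennreal_mult)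
  also have "\<dots> = (\<integral>\<^sup>+s. ennreal (exp (\<theta> * real_of_int s)) * (\<integral>\<^sup>+z. ennreal (exp (\<theta> * real_of_int z)) \<partial>measure_pmf p) \<partial>measure_pmf (step_sum_pmf p j))"
    by (simp add: nn_integral_cmult)
  also have "\<dots> = (\<integral>\<^sup>+d. ennreal (exp (\<theta> * real_of_int d)) \<partial>measure_pmf (step_sum_pmf p j)) * (\<integral>\<^sup>+z. ennreal (exp (\<theta> * real_of_int z)) \<partial>measure_pmf p)"
    by (simp add: nn_integral_multc)
  finally show ?case using Suc by (simp add: mult.commute)
qed

lemma crw_mgf:
  assumes s: "0 < s" and phi: "(\<integral>\<^sup>+x. ennreal (exp (\<theta> * real_of_int x)) \<partial>measure_pmf p) = ennreal \<phi>"
    and phi0: "0 \<le> \<phi>"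
  shows "(\<integral>\<^sup>+d. ennreal (exp (\<theta> * real_of_int d)) \<partial>measure_pmf (crw_pmf p s)) = ennreal (exp (s * (\<phi> - 1)))"
proof -
  have "(\<integral>\<^sup>+d. ennreal (exp (\<theta> * real_of_int d)) \<partial>measure_pmf (crw_pmf p s))
      = (\<integral>\<^sup>+j. ennreal \<phi> ^ j \<partial>measure_pmf (poisson_pmf s))"
    using s by (simp add: crw_pmf_def step_mgf phi)
  also have "\<dots> = (\<integral>\<^sup>+j. ennreal (s ^ j / fact j * exp (-s) * \<phi> ^ j) \<partial>count_space UNIV)"
    using s phi0 by (simp add: nn_integral_measure_pmf ennreal_power ennreal_mult[symmetric])
  also have "\<dots> = (\<Sum>j. ennreal (s ^ j / fact j * exp (-s) * \<phi> ^ j))"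
    by (rule nn_integral_count_space_nat)
  also have "\<dots> = ennreal (\<Sum>j. exp (-s) * ((s * \<phi>) ^ j / fact j))"
  proof (rule suminf_ennreal2[THEN trans])
    show "\<And>j. 0 \<le> s ^ j / fact j * exp (- s) * \<phi> ^ j" using s phi0 by auto
    show "summable (\<lambda>j. s ^ j / fact j * exp (- s) * \<phi> ^ j)"
      using summable_mult[OF summable_exp_generic[of "s * \<phi>"], of "exp (-s)"]
      by (simp add: power_mult_distrib divide_inverse_commute mult_ac)
    show "ennreal (\<Sum>j. s ^ j / fact j * exp (- s) * \<phi> ^ j) = ennreal (\<Sum>j. exp (- s) * ((s * \<phi>) ^ j / fact j))"
      by (simp add: power_mult_distrib mult_ac)
  qed
  also have "(\<Sum>j. exp (-s) * ((s * \<phi>) ^ j / fact j)) = exp (-s) * exp (s * \<phi>)"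
    by (subst suminf_mult) (simp_all add: exp_def divide_inverse_commute summable_exp)
  also have "exp (-s) * exp (s * \<phi>) = exp (s * (\<phi> - 1))"
    by (simp add: exp_add[symmetric] algebra_simps)
  finally show ?thesis .
qed


context
  fixes p :: "int pmf" and \<delta> :: real
  assumes dpos: "\<delta> > 0"
    and mgf: "\<And>\<theta>. \<bar>\<theta>\<bar> \<le> \<delta> \<Longrightarrow> (\<lambda>x. exp (\<theta> * real_of_int x) * pmf p x) summable_on UNIV"
begin

lemma crw_bound:
  assumes s: "0 \<le> s" and th: "\<bar>\<theta>\<bar> \<le> \<delta> / 2"
  shows "(\<integral>\<^sup>+d. ennreal (exp (\<theta> * (real_of_int d - s * measure_pmf.expectation p real_of_int))) \<partial>measure_pmf (crw_pmf p s))
     \<le> ennreal (exp (s * Kp p \<delta> * \<theta>\<^sup>2))"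
proof (cases "s = 0")
  case True
  then show ?thesis by (simp add: crw_pmf_def)
next
  case False
  with s have s: "0 < s" by simp
  let ?b = "measure_pmf.expectation p real_of_int"
  define \<phi> where "\<phi> = measure_pmf.expectation p (\<lambda>x. exp (\<theta> * real_of_int x))"
  have int: "integrable (measure_pmf p) (\<lambda>x. exp (\<theta> * real_of_int x))"
    by (rule mgf_integrable[OF dpos mgf]) (use th dpos in auto)
  have phi0: "0 \<le> \<phi>" unfolding \<phi>_def by (intro integral_nonneg_AE) auto
  have phi: "(\<integral>\<^sup>+x. ennreal (exp (\<theta> * real_of_int x)) \<partial>measure_pmf p) = ennreal \<phi>"
    unfolding \<phi>_def by (rule nn_integral_eq_integral[OF int]) auto
  have "(\<integral>\<^sup>+d. ennreal (exp (\<theta> * (real_of_int d - s * ?b))) \<partial>measure_pmf (crw_pmf p s))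
      = (\<integral>\<^sup>+d. ennreal (exp (- \<theta> * s * ?b)) * ennreal (exp (\<theta> * real_of_int d)) \<partial>measure_pmf (crw_pmf p s))"
    by (rule nn_integral_cong) (simp add: ennreal_mult[symmetric] exp_add[symmetric] algebra_simps)
  also have "\<dots> = ennreal (exp (- \<theta> * s * ?b)) * ennreal (exp (s * (\<phi> - 1)))"
    by (simp add: nn_integral_cmult crw_mgf[OF s phi phi0])
  also have "\<dots> = ennreal (exp (s * (\<phi> - 1 - \<theta> * ?b)))"
    by (simp add: ennreal_mult[symmetric] exp_add[symmetric] algebra_simps)
  also have "\<dots> \<le> ennreal (exp (s * Kp p \<delta> * \<theta>\<^sup>2))"
  proof -
    have "\<phi> - 1 - \<theta> * ?b \<le> \<theta>\<^sup>2 * Kp p \<delta>"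
      using phi_bound[OF dpos mgf th] unfolding \<phi>_def by linarith
    then have "s * (\<phi> - 1 - \<theta> * ?b) \<le> s * Kp p \<delta> * \<theta>\<^sup>2"
      using s by (simp add: mult_left_mono mult_ac)
    then show ?thesis by (intro ennreal_leI) simp
  qed
  finally show ?thesis .
qed

end


lemma sum_int_nat: "(\<Sum>x\<in>{k+1..k+int u}. g x) = (\<Sum>j=1..u. g (k + int j))"
proof (induction u)
  case 0
  then show ?case by simp
next
  case (Suc u)
  have "{k+1..k+int (Suc u)} = insert (1 + (k + int u)) {k+1..k+int u}"
    using atLeastAtMostPlus1_int_conv[of "k+1" "k + int u"] by (simp add: add_ac)
  then show ?case using Suc by (simp add: add_ac)
qed

lemma block_sum:
  fixes f :: "int \<Rightarrow> real" and L u :: nat and e Bf :: real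
  assumes L: "L > 0" and e: "e \<ge> 0" and Bf: "\<And>j. \<bar>f j\<bar> \<le> Bf"
    and hyp: "\<And>m. 0 \<le> m \<Longrightarrow> m \<le> int u \<Longrightarrow> \<bar>\<Sum>j=1..L. f (m + int j)\<bar> \<le> e * L"
  shows "\<bar>\<Sum>j=1..u. f (int j)\<bar> \<le> e * u + L * Bf"
  using Bf hyp
proof (induction u arbitrary: f rule: less_induct)
  case (less u)
  have B0: "0 \<le> Bf" using less.prems(1)[of 0] by linarith
  show ?case
  proof (cases "u < L")
    case True
    have "\<bar>\<Sum>j=1..u. f (int j)\<bar> \<le> (\<Sum>j=1..u. \<bar>f (int j)\<bar>)" by (rule sum_abs)
    also have "\<dots> \<le> (\<Sum>j=1..u. Bf)" by (intro sum_mono less.prems(1))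
    also have "\<dots> = u * Bf" by simp
    also have "\<dots> \<le> L * Bf" using True B0 by (intro mult_right_mono) auto
    finally show ?thesis using e by (simp add: add_increasing)
  next
    case False
    then obtain w where u: "u = L + w" by (metis le_add_diff_inverse not_less)
    have split: "(\<Sum>j=1..u. f (int j)) = (\<Sum>j=1..L. f (int j)) + (\<Sum>j=1..w. f (int L + int j))"
    proof -
      have "{1..u} = {1..L} \<union> {L+1..L+w}" using u L by auto
      then have "(\<Sum>j=1..u. f (int j)) = (\<Sum>j=1..L. f (int j)) + (\<Sum>j=L+1..L+w. f (int j))"
        by (simp add: sum.union_disjoint)
      also have "(\<Sum>j=L+1..L+w. f (int j)) = (\<Sum>j=1..w. f (int (j + L)))"
        using sum.shift_bounds_cl_nat_ivl[of "\<lambda>j. f (int j)" 1 L w] by (simp add: add_ac)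
      finally show ?thesis by (simp add: add_ac)
    qed
    have first: "\<bar>\<Sum>j=1..L. f (int j)\<bar> \<le> e * L" using less.prems(2)[of 0] by simp
    have second: "\<bar>\<Sum>j=1..w. f (int L + int j)\<bar> \<le> e * w + L * Bf"
    proof (rule less.IH[of w "\<lambda>j. f (int L + j)"])
      show "w < u" using u L by simp
      show "\<And>j. \<bar>f (int L + j)\<bar> \<le> Bf" by (rule less.prems(1))
      show "\<bar>\<Sum>j = 1..L. f (int L + (m + int j))\<bar> \<le> e * real L" if "0 \<le> m" "m \<le> int w" for m
        using less.prems(2)[of "int L + m"] that u by (simp add: add_ac)
    qed
    show ?thesis using first second split u abs_triangle_ineq[of "\<Sum>j=1..L. f (int j)" "\<Sum>j=1..w. f (int L + int j)"] by (simp add: algebra_simps)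
  qed
qed

definition Hs :: "(int \<Rightarrow> real) \<Rightarrow> int \<Rightarrow> int \<Rightarrow> real" where
  "Hs rho k y = (\<Sum>x\<in>{k+1..k+y}. rho x) - (\<Sum>x\<in>{k+y+1..k}. rho x)"

lemma Hs_nonneg_case: fixes r0 :: real shows "0 \<le> y \<Longrightarrow> Hs rho k y - r0 * real_of_int y = (\<Sum>j=1..nat y. rho (k + int j) - r0)"
proof -
  assume y: "0 \<le> y"
  have "Hs rho k y = (\<Sum>x\<in>{k+1..k+int (nat y)}. rho x)" using y by (simp add: Hs_def)
  also have "\<dots> = (\<Sum>j=1..nat y. rho (k + int j))" by (rule sum_int_nat)
  finally show ?thesis using y by (simp add: sum_subtractf)
qed

lemma Hs_neg_case: fixes r0 :: real shows "y < 0 \<Longrightarrow> Hs rho k y - r0 * real_of_int y = - (\<Sum>j=1..nat (-y). rho (k + y + int j) - r0)"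
proof -
  assume y: "y < 0"
  have "Hs rho k y = - (\<Sum>x\<in>{(k+y)+1..(k+y)+int (nat (-y))}. rho x)" using y by (simp add: Hs_def)
  also have "(\<Sum>x\<in>{(k+y)+1..(k+y)+int (nat (-y))}. rho x) = (\<Sum>j=1..nat (-y). rho (k + y + int j))" by (rule sum_int_nat)
  finally show ?thesis using y by (simp add: sum_subtractf)
qed

lemma Hs_bound_global:
  fixes r0 Bf :: real
  assumes "\<And>x. \<bar>rho x - r0\<bar> \<le> Bf"
  shows "\<bar>Hs rho k y - r0 * real_of_int y\<bar> \<le> Bf * \<bar>real_of_int y\<bar>"
proof (cases "0 \<le> y")
  case True
  have "\<bar>\<Sum>j=1..nat y. rho (k + int j) - r0\<bar> \<le> (\<Sum>j=1..nat y. \<bar>rho (k + int j) - r0\<bar>)" by (rule sum_abs)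
  also have "\<dots> \<le> (\<Sum>j=1..nat y. Bf)" by (intro sum_mono assms)
  finally show ?thesis using True by (simp add: Hs_nonneg_case mult.commute)
next
  case False
  have "\<bar>\<Sum>j=1..nat (-y). rho (k + y + int j) - r0\<bar> \<le> (\<Sum>j=1..nat (-y). \<bar>rho (k + y + int j) - r0\<bar>)" by (rule sum_abs)
  also have "\<dots> \<le> (\<Sum>j=1..nat (-y). Bf)" by (intro sum_mono assms)
  finally show ?thesis using False by (simp add: Hs_neg_case mult.commute)
qed

lemma Hs_bound_local:
  fixes L :: nat and r0 Bf e R :: real
  assumes L: "L > 0" and e: "e \<ge> 0" and Bf: "\<And>x. \<bar>rho x - r0\<bar> \<le> Bf"
    and hyp: "\<And>m. \<bar>real_of_int m\<bar> \<le> R \<Longrightarrow> \<bar>\<Sum>j=1..L. rho (k + m + int j) - r0\<bar> \<le> e * L"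
    and y: "\<bar>real_of_int y\<bar> \<le> R"
  shows "\<bar>Hs rho k y - r0 * real_of_int y\<bar> \<le> e * \<bar>real_of_int y\<bar> + L * Bf"
proof (cases "0 \<le> y")
  case True
  have "\<bar>\<Sum>j=1..nat y. rho (k + int j) - r0\<bar> \<le> e * nat y + L * Bf"
  proof (rule block_sum[OF L e, where f="\<lambda>j. rho (k + j) - r0"])
    show "\<And>j. \<bar>rho (k + j) - r0\<bar> \<le> Bf" by (rule Bf)
    show "\<bar>\<Sum>j = 1..L. rho (k + (m + int j)) - r0\<bar> \<le> e * real L" if "0 \<le> m" "m \<le> int (nat y)" for m
      using hyp[of m] that y True by (simp add: add_ac)
  qed
  then show ?thesis using True by (simp add: Hs_nonneg_case)
next
  case False
  have "\<bar>\<Sum>j=1..nat (-y). rho (k + y + int j) - r0\<bar> \<le> e * nat (-y) + L * Bf"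
  proof (rule block_sum[OF L e, where f="\<lambda>j. rho (k + y + j) - r0"])
    show "\<And>j. \<bar>rho (k + y + j) - r0\<bar> \<le> Bf" by (rule Bf)
    show "\<bar>\<Sum>j = 1..L. rho (k + y + (m + int j)) - r0\<bar> \<le> e * real L" if "0 \<le> m" "m \<le> int (nat (-y))" for m
      using hyp[of "y + m"] that y False by (simp add: add_ac)
  qed
  then show ?thesis using False by (simp add: Hs_neg_case)
qed


lemma nn_to_int:
  fixes f :: "int \<Rightarrow> real"
  assumes "\<And>x. 0 \<le> f x" "(\<integral>\<^sup>+x. ennreal (f x) \<partial>measure_pmf \<mu>) \<le> ennreal C" "0 \<le> C"
  shows "integrable (measure_pmf \<mu>) f" "measure_pmf.expectation \<mu> f \<le> C"
proof -
  have "(\<integral>\<^sup>+x. ennreal (norm (f x)) \<partial>measure_pmf \<mu>) < \<infinity>"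
    using assms(1,2) by (simp add: order.strict_trans1)
  then show "integrable (measure_pmf \<mu>) f" by (intro integrableI_bounded) auto
  have "measure_pmf.expectation \<mu> f = enn2real (\<integral>\<^sup>+x. ennreal (f x) \<partial>measure_pmf \<mu>)"
    by (rule integral_eq_nn_integral) (use assms in auto)
  also have "\<dots> \<le> enn2real (ennreal C)"
    by (rule enn2real_mono[OF assms(2)]) simp
  finally show "measure_pmf.expectation \<mu> f \<le> C" using assms(3) by simp
qed

context
  fixes \<mu> :: "int pmf" and m :: real and c :: int and V \<theta>0 :: real
  assumes cm: "\<bar>real_of_int c - m\<bar> \<le> 1"
    and V: "0 \<le> V"
    and mgfb: "\<And>\<theta>. \<bar>\<theta>\<bar> \<le> \<theta>0 \<Longrightarrow>
       (\<integral>\<^sup>+d. ennreal (exp (\<theta> * (real_of_int d - m))) \<partial>measure_pmf \<mu>) \<le> ennreal (exp (V * \<theta>\<^sup>2))"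
begin

lemma exp_y_bound: assumes "\<bar>\<theta>\<bar> \<le> \<theta>0"
  shows "(\<integral>\<^sup>+d. ennreal (exp (\<theta> * real_of_int (c - d))) \<partial>measure_pmf \<mu>) \<le> ennreal (exp \<bar>\<theta>\<bar> * exp (V * \<theta>\<^sup>2))"
proof -
  have "(\<integral>\<^sup>+d. ennreal (exp (\<theta> * real_of_int (c - d))) \<partial>measure_pmf \<mu>)
      \<le> (\<integral>\<^sup>+d. ennreal (exp \<bar>\<theta>\<bar>) * ennreal (exp ((-\<theta>) * (real_of_int d - m))) \<partial>measure_pmf \<mu>)"
  proof (rule nn_integral_mono)
    fix d
    have "\<theta> * real_of_int (c - d) = \<theta> * (real_of_int c - m) + (-\<theta>) * (real_of_int d - m)"
      by (simp add: algebra_simps)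
    also have "\<theta> * (real_of_int c - m) \<le> \<bar>\<theta>\<bar>"
      using cm abs_mult[of \<theta> "real_of_int c - m"] abs_ge_self[of "\<theta> * (real_of_int c - m)"]
        mult_left_mono[OF cm abs_ge_zero[of \<theta>]] by linarith
    finally have "exp (\<theta> * real_of_int (c - d)) \<le> exp \<bar>\<theta>\<bar> * exp ((-\<theta>) * (real_of_int d - m))"
      by (simp add: exp_add[symmetric])
    then show "ennreal (exp (\<theta> * real_of_int (c - d))) \<le> ennreal (exp \<bar>\<theta>\<bar>) * ennreal (exp ((-\<theta>) * (real_of_int d - m)))"
      by (simp add: ennreal_mult[symmetric] ennreal_leI)
  qed
  also have "\<dots> = ennreal (exp \<bar>\<theta>\<bar>) * (\<integral>\<^sup>+d. ennreal (exp ((-\<theta>) * (real_of_int d - m))) \<partial>measure_pmf \<mu>)"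
    by (simp add: nn_integral_cmult)
  also have "\<dots> \<le> ennreal (exp \<bar>\<theta>\<bar>) * ennreal (exp (V * (-\<theta>)\<^sup>2))"
    by (intro mult_left_mono mgfb) (use assms in auto)
  finally show ?thesis by (simp add: ennreal_mult[symmetric])
qed

lemma exp_absy_bound: assumes "0 \<le> \<theta>" "\<theta> \<le> \<theta>0"
  shows "(\<integral>\<^sup>+d. ennreal (exp (\<theta> * \<bar>real_of_int (c - d)\<bar>)) \<partial>measure_pmf \<mu>) \<le> ennreal (2 * exp \<theta> * exp (V * \<theta>\<^sup>2))"
proof -
  have "(\<integral>\<^sup>+d. ennreal (exp (\<theta> * \<bar>real_of_int (c - d)\<bar>)) \<partial>measure_pmf \<mu>)
     \<le> (\<integral>\<^sup>+d. ennreal (exp (\<theta> * real_of_int (c - d))) + ennreal (exp ((-\<theta>) * real_of_int (c - d))) \<partial>measure_pmf \<mu>)"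
  proof (intro nn_integral_mono)
    fix d
    let ?z = "real_of_int (c - d)"
    have "\<theta> * \<bar>?z\<bar> = \<theta> * ?z \<or> \<theta> * \<bar>?z\<bar> = (-\<theta>) * ?z"
      by (cases "?z \<ge> 0") (simp_all add: algebra_simps)
    then have "exp (\<theta> * \<bar>?z\<bar>) = exp (\<theta> * ?z) \<or> exp (\<theta> * \<bar>?z\<bar>) = exp ((-\<theta>) * ?z)"
      by metis
    moreover have "0 < exp (\<theta> * ?z)" "0 < exp ((-\<theta>) * ?z)" by auto
    ultimately have "exp (\<theta> * \<bar>?z\<bar>) \<le> exp (\<theta> * ?z) + exp ((-\<theta>) * ?z)" by linarith
    then show "ennreal (exp (\<theta> * \<bar>?z\<bar>)) \<le> ennreal (exp (\<theta> * ?z)) + ennreal (exp ((-\<theta>) * ?z))"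
      by (simp add: ennreal_plus[symmetric] del: ennreal_plus)
  qed
  also have "\<dots> = (\<integral>\<^sup>+d. ennreal (exp (\<theta> * real_of_int (c - d))) \<partial>measure_pmf \<mu>) + (\<integral>\<^sup>+d. ennreal (exp ((-\<theta>) * real_of_int (c - d))) \<partial>measure_pmf \<mu>)"
    by (rule nn_integral_add) auto
  also have "\<dots> \<le> ennreal (exp \<bar>\<theta>\<bar> * exp (V * \<theta>\<^sup>2)) + ennreal (exp \<bar>-\<theta>\<bar> * exp (V * (-\<theta>)\<^sup>2))"
    by (intro add_mono exp_y_bound) (use assms in auto)
  also have "\<dots> = ennreal (2 * exp \<theta> * exp (V * \<theta>\<^sup>2))"
    using assms by (simp add: ennreal_plus[symmetric] del: ennreal_plus)
  finally show ?thesis .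
qed

lemma absy_bound: assumes "0 < \<theta>" "\<theta> \<le> \<theta>0"
  shows "integrable (measure_pmf \<mu>) (\<lambda>d. \<bar>real_of_int (c - d)\<bar>)"
    "measure_pmf.expectation \<mu> (\<lambda>d. \<bar>real_of_int (c - d)\<bar>) \<le> 2 * exp \<theta> * exp (V * \<theta>\<^sup>2) / \<theta>"
proof -
  have "(\<integral>\<^sup>+d. ennreal \<bar>real_of_int (c - d)\<bar> \<partial>measure_pmf \<mu>)
      \<le> (\<integral>\<^sup>+d. ennreal (1 / \<theta>) * ennreal (exp (\<theta> * \<bar>real_of_int (c - d)\<bar>)) \<partial>measure_pmf \<mu>)"
  proof (rule nn_integral_mono)
    fix d
    have "\<theta> * \<bar>real_of_int (c - d)\<bar> \<le> exp (\<theta> * \<bar>real_of_int (c - d)\<bar>)"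
      using exp_ge_add_one_self[of "\<theta> * \<bar>real_of_int (c - d)\<bar>"] by linarith
    then have "\<bar>real_of_int (c - d)\<bar> \<le> 1 / \<theta> * exp (\<theta> * \<bar>real_of_int (c - d)\<bar>)"
      using assms by (simp add: field_simps)
    then show "ennreal \<bar>real_of_int (c - d)\<bar> \<le> ennreal (1 / \<theta>) * ennreal (exp (\<theta> * \<bar>real_of_int (c - d)\<bar>))"
      using assms by (simp add: ennreal_mult[symmetric] ennreal_leI)
  qed
  also have "\<dots> = ennreal (1 / \<theta>) * (\<integral>\<^sup>+d. ennreal (exp (\<theta> * \<bar>real_of_int (c - d)\<bar>)) \<partial>measure_pmf \<mu>)"
    by (simp add: nn_integral_cmult)
  also have "\<dots> \<le> ennreal (1 / \<theta>) * ennreal (2 * exp \<theta> * exp (V * \<theta>\<^sup>2))"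
    by (intro mult_left_mono exp_absy_bound) (use assms in auto)
  also have "\<dots> = ennreal (2 * exp \<theta> * exp (V * \<theta>\<^sup>2) / \<theta>)"
    using assms by (simp add: ennreal_mult[symmetric])
  finally have *: "(\<integral>\<^sup>+d. ennreal \<bar>real_of_int (c - d)\<bar> \<partial>measure_pmf \<mu>) \<le> ennreal (2 * exp \<theta> * exp (V * \<theta>\<^sup>2) / \<theta>)" .
  show "integrable (measure_pmf \<mu>) (\<lambda>d. \<bar>real_of_int (c - d)\<bar>)"
    by (rule nn_to_int(1)[OF _ *]) (use assms in auto)
  show "measure_pmf.expectation \<mu> (\<lambda>d. \<bar>real_of_int (c - d)\<bar>) \<le> 2 * exp \<theta> * exp (V * \<theta>\<^sup>2) / \<theta>"
    by (rule nn_to_int(2)[OF _ *]) (use assms in auto)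
qed

lemma tail_bound: assumes "0 < \<theta>" "2 * \<theta> \<le> \<theta>0" "0 \<le> R"
  shows "integrable (measure_pmf \<mu>) (\<lambda>d. \<bar>real_of_int (c - d)\<bar> * indicator {d. \<bar>real_of_int (c - d)\<bar> > R} d)"
    "measure_pmf.expectation \<mu> (\<lambda>d. \<bar>real_of_int (c - d)\<bar> * indicator {d. \<bar>real_of_int (c - d)\<bar> > R} d)
       \<le> 2 * exp (2 * \<theta>) * exp (V * (2 * \<theta>)\<^sup>2) * exp (- \<theta> * R) / \<theta>"
proof -
  let ?y = "\<lambda>d. \<bar>real_of_int (c - d)\<bar>"
  have "(\<integral>\<^sup>+d. ennreal (?y d * indicator {d. ?y d > R} d) \<partial>measure_pmf \<mu>)
      \<le> (\<integral>\<^sup>+d. ennreal (exp (- \<theta> * R) / \<theta>) * ennreal (exp ((2 * \<theta>) * ?y d)) \<partial>measure_pmf \<mu>)"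
  proof (rule nn_integral_mono)
    fix d
    have a0: "\<theta> * ?y d \<le> exp (\<theta> * ?y d)"
      using exp_ge_add_one_self[of "\<theta> * ?y d"] by linarith
    have a: "?y d \<le> 1 / \<theta> * exp (\<theta> * ?y d)"
      using a0 assms by (simp add: field_simps)
    have "?y d * indicator {d. ?y d > R} d \<le> exp (- \<theta> * R) / \<theta> * exp ((2 * \<theta>) * ?y d)"
    proof (cases "?y d > R")
      case True
      have b: "1 \<le> exp (\<theta> * (?y d - R))" using True assms by simp
      have pos: "0 < 1 / \<theta> * exp (\<theta> * ?y d)" using assms by simp
      have "1 / \<theta> * exp (\<theta> * ?y d) \<le> 1 / \<theta> * exp (\<theta> * ?y d) * exp (\<theta> * (?y d - R))"
        using b pos by (simp only: mult_le_cancel_left1) simp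
      then have "?y d \<le> 1 / \<theta> * exp (\<theta> * ?y d) * exp (\<theta> * (?y d - R))"
        using a by linarith
      also have "\<dots> = exp (- \<theta> * R) / \<theta> * exp ((2 * \<theta>) * ?y d)"
        by (simp add: exp_add[symmetric] algebra_simps)
      finally show ?thesis using True by simp
    qed (use assms in simp)
    then show "ennreal (?y d * indicator {d. ?y d > R} d) \<le> ennreal (exp (- \<theta> * R) / \<theta>) * ennreal (exp ((2 * \<theta>) * ?y d))"
      using assms by (simp add: ennreal_mult[symmetric] ennreal_leI)
  qed
  also have "\<dots> = ennreal (exp (- \<theta> * R) / \<theta>) * (\<integral>\<^sup>+d. ennreal (exp ((2 * \<theta>) * ?y d)) \<partial>measure_pmf \<mu>)"
    by (simp add: nn_integral_cmult)
  also have "\<dots> \<le> ennreal (exp (- \<theta> * R) / \<theta>) * ennreal (2 * exp (2 * \<theta>) * exp (V * (2 * \<theta>)\<^sup>2))"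
    by (intro mult_left_mono exp_absy_bound) (use assms in auto)
  also have "\<dots> = ennreal (2 * exp (2 * \<theta>) * exp (V * (2 * \<theta>)\<^sup>2) * exp (- \<theta> * R) / \<theta>)"
    using assms by (simp add: ennreal_mult[symmetric] mult_ac)
  finally have *: "(\<integral>\<^sup>+d. ennreal (?y d * indicator {d. ?y d > R} d) \<partial>measure_pmf \<mu>) \<le> ennreal (2 * exp (2 * \<theta>) * exp (V * (2 * \<theta>)\<^sup>2) * exp (- \<theta> * R) / \<theta>)" .
  show "integrable (measure_pmf \<mu>) (\<lambda>d. ?y d * indicator {d. ?y d > R} d)"
    by (rule nn_to_int(1)[OF _ *]) (use assms in auto)
  show "measure_pmf.expectation \<mu> (\<lambda>d. ?y d * indicator {d. ?y d > R} d) \<le> 2 * exp (2 * \<theta>) * exp (V * (2 * \<theta>)\<^sup>2) * exp (- \<theta> * R) / \<theta>"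
    by (rule nn_to_int(2)[OF _ *]) (use assms in auto)
qed

lemma mean_y_bound: assumes "0 < \<theta>" "\<theta> \<le> \<theta>0"
  shows "\<bar>measure_pmf.expectation \<mu> (\<lambda>d. real_of_int (c - d))\<bar> \<le> (exp \<theta> * exp (V * \<theta>\<^sup>2) - 1) / \<theta>"
proof -
  have iy: "integrable (measure_pmf \<mu>) (\<lambda>d. real_of_int (c - d))"
    using absy_bound(1)[OF assms] by (simp add: integrable_abs_iff)
  have one: "\<sigma> * measure_pmf.expectation \<mu> (\<lambda>d. real_of_int (c - d)) \<le> exp \<theta> * exp (V * \<theta>\<^sup>2) - 1"
    if \<sigma>: "\<bar>\<sigma>\<bar> = \<theta>" for \<sigma>
  proof -
    have *: "(\<integral>\<^sup>+d. ennreal (exp (\<sigma> * real_of_int (c - d))) \<partial>measure_pmf \<mu>) \<le> ennreal (exp \<theta> * exp (V * \<theta>\<^sup>2))"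
    proof -
      have sq: "\<sigma>\<^sup>2 = \<theta>\<^sup>2" using \<sigma> by (metis power2_abs)
      show ?thesis using exp_y_bound[of \<sigma>] \<sigma> assms by (simp only: sq)
    qed
    have ie: "integrable (measure_pmf \<mu>) (\<lambda>d. exp (\<sigma> * real_of_int (c - d)))"
      by (rule nn_to_int(1)[OF _ *]) auto
    have "1 + \<sigma> * measure_pmf.expectation \<mu> (\<lambda>d. real_of_int (c - d))
        = measure_pmf.expectation \<mu> (\<lambda>d. 1 + \<sigma> * real_of_int (c - d))"
      using iy by simp
    also have "\<dots> \<le> measure_pmf.expectation \<mu> (\<lambda>d. exp (\<sigma> * real_of_int (c - d)))"
      by (rule integral_mono[OF _ ie]) (use iy exp_ge_add_one_self in auto)
    also have "\<dots> \<le> exp \<theta> * exp (V * \<theta>\<^sup>2)"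
      by (rule nn_to_int(2)[OF _ *]) auto
    finally show ?thesis by simp
  qed
  have "\<theta> * \<bar>measure_pmf.expectation \<mu> (\<lambda>d. real_of_int (c - d))\<bar> \<le> exp \<theta> * exp (V * \<theta>\<^sup>2) - 1"
  proof -
    let ?E = "measure_pmf.expectation \<mu> (\<lambda>d. real_of_int (c - d))"
    have o1: "\<theta> * ?E \<le> exp \<theta> * exp (V * \<theta>\<^sup>2) - 1" using one[of \<theta>] assms by simp
    have o2: "(-\<theta>) * ?E \<le> exp \<theta> * exp (V * \<theta>\<^sup>2) - 1" using one[of "-\<theta>"] assms by simp
    show ?thesis
    proof (cases "?E \<ge> 0")
      case True then show ?thesis using o1 by simp
    next
      case False then have "\<bar>?E\<bar> = - ?E" by simp
      then show ?thesis using o2 by simp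
    qed
  qed
  then show ?thesis using assms by (simp add: field_simps)
qed

end


lemma G_bounds:
  fixes rho :: "int \<Rightarrow> real"
  assumes "\<And>x. 0 \<le> rho x" "\<And>x. rho x \<le> Rb"
  shows "0 \<le> (\<Sum>x\<in>{k+1..k+y}. rho x)" "(\<Sum>x\<in>{k+1..k+y}. rho x) \<le> Rb * \<bar>real_of_int y\<bar>"
    "0 \<le> (\<Sum>x\<in>{k+y+1..k}. rho x)" "(\<Sum>x\<in>{k+y+1..k}. rho x) \<le> Rb * \<bar>real_of_int y\<bar>"
proof -
  have R0: "0 \<le> Rb" using assms[of 0] by linarith
  show "0 \<le> (\<Sum>x\<in>{k+1..k+y}. rho x)" "0 \<le> (\<Sum>x\<in>{k+y+1..k}. rho x)"
    by (auto intro!: sum_nonneg assms)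
  have "(\<Sum>x\<in>{k+1..k+y}. rho x) \<le> of_nat (card {k+1..k+y}) * Rb"
    by (rule sum_bounded_above) (use assms in auto)
  also have "of_nat (card {k+1..k+y}) = real (nat y)" by simp
  also have "real (nat y) * Rb \<le> Rb * \<bar>real_of_int y\<bar>" using R0 by (cases "y \<ge> 0") (auto simp: mult_nonneg_nonpos)
  finally show "(\<Sum>x\<in>{k+1..k+y}. rho x) \<le> Rb * \<bar>real_of_int y\<bar>" .
  have "(\<Sum>x\<in>{k+y+1..k}. rho x) \<le> of_nat (card {k+y+1..k}) * Rb"
    by (rule sum_bounded_above) (use assms in auto)
  also have "of_nat (card {k+y+1..k}) = real (nat (-y))" by simp
  also have "real (nat (-y)) * Rb \<le> Rb * \<bar>real_of_int y\<bar>" using R0 by (cases "y \<ge> 0") (auto simp: mult_nonneg_nonpos)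
  finally show "(\<Sum>x\<in>{k+y+1..k}. rho x) \<le> Rb * \<bar>real_of_int y\<bar>" .
qed

lemma nn_count_interval:
  fixes rho :: "int \<Rightarrow> real"
  assumes "\<And>x. 0 \<le> rho x" "finite S"
  shows "(\<integral>\<^sup>+ x. ennreal (rho x) * indicator S x \<partial>count_space UNIV) = ennreal (\<Sum>x\<in>S. rho x)"
  using assms by (simp add: nn_integral_indicator_finite sum_ennreal)

lemma EY_side:
  fixes rho :: "int \<Rightarrow> real" and \<mu> :: "int pmf"
  assumes rho0: "\<And>x. 0 \<le> rho x" and rhoB: "\<And>x. rho x \<le> Rb"
    and iy: "integrable (measure_pmf \<mu>) (\<lambda>d. \<bar>real_of_int (c - d)\<bar>)"
    and G0: "\<And>y. 0 \<le> G y" and GB: "\<And>y. G y \<le> Rb * \<bar>real_of_int y\<bar>"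
    and eq: "\<And>d. (\<integral>\<^sup>+ x. ennreal (rho x) * indicator {x. Q x (x + d)} x \<partial>count_space UNIV) = ennreal (G (c - d))"
  shows "integrable (measure_pmf \<mu>) (\<lambda>d. G (c - d))"
    "enn2real (\<integral>\<^sup>+ d. \<integral>\<^sup>+ x. ennreal (rho x) * indicator {x. Q x (x + d)} x \<partial>count_space UNIV \<partial>measure_pmf \<mu>)
      = measure_pmf.expectation \<mu> (\<lambda>d. G (c - d))"
proof -
  show ig: "integrable (measure_pmf \<mu>) (\<lambda>d. G (c - d))"
  proof (rule Bochner_Integration.integrable_bound[OF integrable_mult_right[OF iy, of Rb]])
    show "AE d in measure_pmf \<mu>. norm (G (c - d)) \<le> norm (Rb * \<bar>real_of_int (c - d)\<bar>)"
    proof (rule AE_I2)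
      fix d
      have "norm (G (c - d)) = G (c - d)" using G0 by simp
      also have "\<dots> \<le> Rb * \<bar>real_of_int (c - d)\<bar>" by (rule GB)
      also have "\<dots> \<le> norm (Rb * \<bar>real_of_int (c - d)\<bar>)" by simp
      finally show "norm (G (c - d)) \<le> norm (Rb * \<bar>real_of_int (c - d)\<bar>)" .
    qed
  qed simp
  have "(\<integral>\<^sup>+ d. \<integral>\<^sup>+ x. ennreal (rho x) * indicator {x. Q x (x + d)} x \<partial>count_space UNIV \<partial>measure_pmf \<mu>)
     = (\<integral>\<^sup>+ d. ennreal (G (c - d)) \<partial>measure_pmf \<mu>)"
    by (simp add: eq)
  then show "enn2real (\<integral>\<^sup>+ d. \<integral>\<^sup>+ x. ennreal (rho x) * indicator {x. Q x (x + d)} x \<partial>count_space UNIV \<partial>measure_pmf \<mu>)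
      = measure_pmf.expectation \<mu> (\<lambda>d. G (c - d))"
    using G0 by (simp add: integral_eq_nn_integral)
qed

lemma EY_diff:
  fixes M :: "'a measure" and eta :: "int \<Rightarrow> 'a \<Rightarrow> nat" and X :: "int \<Rightarrow> nat \<Rightarrow> 'a \<Rightarrow> real \<Rightarrow> int"
  assumes P: "prob_space M" and W: "\<And>x i. is_crw M p x (X x i)" and I: "system_indep M eta X"
    and s: "0 \<le> s"
    and rhoeq: "\<And>x. (\<integral>\<^sup>+\<omega>. ennreal (of_nat (eta x \<omega>)) \<partial>M) = ennreal (rho x)"
    and rho0: "\<And>x. 0 \<le> rho x" and rhoB: "\<And>x. rho x \<le> Rb"
    and iy: "integrable (measure_pmf (crw_pmf p s)) (\<lambda>d. \<bar>real_of_int (c - d)\<bar>)"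
  shows "enn2real (\<integral>\<^sup>+\<omega>. particle_count eta X (\<lambda>a c'. a \<ge> k + 1 \<and> c' \<le> k + c) s \<omega> \<partial>M)
       - enn2real (\<integral>\<^sup>+\<omega>. particle_count eta X (\<lambda>a c'. a \<le> k \<and> c' > k + c) s \<omega> \<partial>M)
       = measure_pmf.expectation (crw_pmf p s) (\<lambda>d. Hs rho k (c - d))"
proof -
  let ?\<mu> = "crw_pmf p s"
  define G1 where "G1 y = (\<Sum>x\<in>{k+1..k+y}. rho x)" for y
  define G2 where "G2 y = (\<Sum>x\<in>{k+y+1..k}. rho x)" for y
  have eq1: "(\<integral>\<^sup>+ x. ennreal (rho x) * indicator {x. (\<lambda>a c'. a \<ge> k + 1 \<and> c' \<le> k + c) x (x + d)} x \<partial>count_space UNIV) = ennreal (G1 (c - d))" for d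
  proof -
    have "{x. (\<lambda>a c'. a \<ge> k + 1 \<and> c' \<le> k + c) x (x + d)} = {k+1..k+(c-d)}" by auto
    then show ?thesis unfolding G1_def using nn_count_interval[OF rho0] by simp
  qed
  have eq2: "(\<integral>\<^sup>+ x. ennreal (rho x) * indicator {x. (\<lambda>a c'. a \<le> k \<and> c' > k + c) x (x + d)} x \<partial>count_space UNIV) = ennreal (G2 (c - d))" for d
  proof -
    have "{x. (\<lambda>a c'. a \<le> k \<and> c' > k + c) x (x + d)} = {k+(c-d)+1..k}" by auto
    then show ?thesis unfolding G2_def using nn_count_interval[OF rho0] by simp
  qed
  have G1_0: "\<And>y. 0 \<le> G1 y" and G1_B: "\<And>y. G1 y \<le> Rb * \<bar>real_of_int y\<bar>"
    and G2_0: "\<And>y. 0 \<le> G2 y" and G2_B: "\<And>y. G2 y \<le> Rb * \<bar>real_of_int y\<bar>"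
    unfolding G1_def G2_def using G_bounds[of rho Rb, OF rho0 rhoB] by blast+
  note S1 = EY_side[OF rho0 rhoB iy G1_0 G1_B eq1]
  note S2 = EY_side[OF rho0 rhoB iy G2_0 G2_B eq2]
  have E1: "(\<integral>\<^sup>+\<omega>. particle_count eta X (\<lambda>a c'. a \<ge> k + 1 \<and> c' \<le> k + c) s \<omega> \<partial>M)
     = (\<integral>\<^sup>+ d. \<integral>\<^sup>+ x. ennreal (rho x) * indicator {x. (\<lambda>a c'. a \<ge> k + 1 \<and> c' \<le> k + c) x (x + d)} x \<partial>count_space UNIV \<partial>measure_pmf ?\<mu>)"
    unfolding expected_count[OF P W I s] rhoeq ..
  have E2: "(\<integral>\<^sup>+\<omega>. particle_count eta X (\<lambda>a c'. a \<le> k \<and> c' > k + c) s \<omega> \<partial>M)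
     = (\<integral>\<^sup>+ d. \<integral>\<^sup>+ x. ennreal (rho x) * indicator {x. (\<lambda>a c'. a \<le> k \<and> c' > k + c) x (x + d)} x \<partial>count_space UNIV \<partial>measure_pmf ?\<mu>)"
    unfolding expected_count[OF P W I s] rhoeq ..
  have "enn2real (\<integral>\<^sup>+\<omega>. particle_count eta X (\<lambda>a c'. a \<ge> k + 1 \<and> c' \<le> k + c) s \<omega> \<partial>M)
       - enn2real (\<integral>\<^sup>+\<omega>. particle_count eta X (\<lambda>a c'. a \<le> k \<and> c' > k + c) s \<omega> \<partial>M)
     = measure_pmf.expectation ?\<mu> (\<lambda>d. G1 (c - d)) - measure_pmf.expectation ?\<mu> (\<lambda>d. G2 (c - d))"
    unfolding E1 E2 S1(2) S2(2) ..
  also have "\<dots> = measure_pmf.expectation ?\<mu> (\<lambda>d. G1 (c - d) - G2 (c - d))"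
    using S1(1) S2(1) by simp
  also have "\<dots> = measure_pmf.expectation ?\<mu> (\<lambda>d. Hs rho k (c - d))"
    unfolding G1_def G2_def Hs_def ..
  finally show ?thesis .
qed


lemma core_bound:
  fixes \<mu> :: "int pmf" and m :: real and c :: int and V \<theta>0 :: real and rho :: "int \<Rightarrow> real"
    and k :: int and r0 Rb e R \<theta>1 \<theta>2 \<theta>3 :: real and L :: nat
  assumes cm: "\<bar>real_of_int c - m\<bar> \<le> 1" and V: "0 \<le> V"
    and mgfb: "\<And>\<theta>. \<bar>\<theta>\<bar> \<le> \<theta>0 \<Longrightarrow>
       (\<integral>\<^sup>+d. ennreal (exp (\<theta> * (real_of_int d - m))) \<partial>measure_pmf \<mu>) \<le> ennreal (exp (V * \<theta>\<^sup>2))"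
    and rho0: "\<And>x. 0 \<le> rho x" and rhoB: "\<And>x. rho x \<le> Rb" and r0: "0 \<le> r0"
    and L: "L > 0" and e: "0 \<le> e" and R: "0 \<le> R"
    and hyp: "\<And>mm. \<bar>real_of_int mm\<bar> \<le> R \<Longrightarrow> \<bar>\<Sum>j=1..L. rho (k + mm + int j) - r0\<bar> \<le> e * L"
    and t1: "0 < \<theta>1" "\<theta>1 \<le> \<theta>0" and t2: "0 < \<theta>2" "\<theta>2 \<le> \<theta>0" and t3: "0 < \<theta>3" "2 * \<theta>3 \<le> \<theta>0"
  shows "\<bar>measure_pmf.expectation \<mu> (\<lambda>d. Hs rho k (c - d))\<bar>
     \<le> r0 * ((exp \<theta>2 * exp (V * \<theta>2\<^sup>2) - 1) / \<theta>2) + e * (2 * exp \<theta>1 * exp (V * \<theta>1\<^sup>2) / \<theta>1)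
       + L * (Rb + r0) + (Rb + r0) * (2 * exp (2 * \<theta>3) * exp (V * (2 * \<theta>3)\<^sup>2) * exp (- \<theta>3 * R) / \<theta>3)"
proof -
  define Bf where "Bf = Rb + r0"
  have Bf: "\<bar>rho x - r0\<bar> \<le> Bf" for x
  proof -
    have "0 \<le> rho x" "rho x \<le> Rb" using rho0 rhoB by auto
    then show ?thesis unfolding Bf_def abs_le_iff using r0 by linarith
  qed
  have B0: "0 \<le> Bf" using Bf[of 0] by linarith
  let ?y = "\<lambda>d. real_of_int (c - d)"
  let ?t = "\<lambda>d. \<bar>?y d\<bar> * indicator {d. \<bar>?y d\<bar> > R} d"
  note ab = absy_bound[OF cm V mgfb, OF _ t1]
  note tb = tail_bound[OF cm V mgfb, OF _ t3 R]
  note mb = mean_y_bound[OF cm V mgfb, OF _ t2]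
  have iya: "integrable (measure_pmf \<mu>) (\<lambda>d. \<bar>?y d\<bar>)" using ab(1) by simp
  have iy: "integrable (measure_pmf \<mu>) ?y" using iya by (simp add: integrable_abs_iff)
  have it: "integrable (measure_pmf \<mu>) ?t" using tb(1) by simp
  have pw: "\<bar>Hs rho k (c - d) - r0 * ?y d\<bar> \<le> e * \<bar>?y d\<bar> + L * Bf + Bf * ?t d" for d
  proof (cases "\<bar>?y d\<bar> \<le> R")
    case True
    have "\<bar>Hs rho k (c - d) - r0 * ?y d\<bar> \<le> e * \<bar>?y d\<bar> + L * Bf"
      by (rule Hs_bound_local[OF L e Bf hyp True])
    moreover have "0 \<le> Bf * ?t d" using B0 by simp
    ultimately show ?thesis by linarith
  next
    case False
    have "\<bar>Hs rho k (c - d) - r0 * ?y d\<bar> \<le> Bf * \<bar>?y d\<bar>" by (rule Hs_bound_global[OF Bf])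
    moreover have "Bf * ?t d = Bf * \<bar>?y d\<bar>" using False by simp
    moreover have "0 \<le> e * \<bar>?y d\<bar> + L * Bf" using e B0 by simp
    ultimately show ?thesis by linarith
  qed
  have iD: "integrable (measure_pmf \<mu>) (\<lambda>d. Hs rho k (c - d) - r0 * ?y d)"
  proof (rule Bochner_Integration.integrable_bound)
    show "integrable (measure_pmf \<mu>) (\<lambda>d. e * \<bar>?y d\<bar> + L * Bf + Bf * ?t d)"
      using iya it by simp
    show "AE d in measure_pmf \<mu>. norm (Hs rho k (c - d) - r0 * ?y d) \<le> norm (e * \<bar>?y d\<bar> + L * Bf + Bf * ?t d)"
    proof (rule AE_I2)
      fix d
      have "norm (Hs rho k (c - d) - r0 * ?y d) = \<bar>Hs rho k (c - d) - r0 * ?y d\<bar>" by simp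
      also have "\<dots> \<le> e * \<bar>?y d\<bar> + L * Bf + Bf * ?t d" by (rule pw)
      also have "\<dots> \<le> norm (e * \<bar>?y d\<bar> + L * Bf + Bf * ?t d)" by simp
      finally show "norm (Hs rho k (c - d) - r0 * ?y d) \<le> norm (e * \<bar>?y d\<bar> + L * Bf + Bf * ?t d)" .
    qed
  qed simp
  have iH: "integrable (measure_pmf \<mu>) (\<lambda>d. Hs rho k (c - d))"
  proof -
    have "integrable (measure_pmf \<mu>) (\<lambda>d. (Hs rho k (c - d) - r0 * ?y d) + r0 * ?y d)"
      by (intro Bochner_Integration.integrable_add iD integrable_mult_right iy)
    then show ?thesis by simp
  qed
  have "measure_pmf.expectation \<mu> (\<lambda>d. Hs rho k (c - d))
      = r0 * measure_pmf.expectation \<mu> ?y + measure_pmf.expectation \<mu> (\<lambda>d. Hs rho k (c - d) - r0 * ?y d)"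
  proof -
    have "measure_pmf.expectation \<mu> (\<lambda>d. Hs rho k (c - d))
        = measure_pmf.expectation \<mu> (\<lambda>d. (Hs rho k (c - d) - r0 * ?y d) + r0 * ?y d)" by simp
    also have "\<dots> = measure_pmf.expectation \<mu> (\<lambda>d. Hs rho k (c - d) - r0 * ?y d) + measure_pmf.expectation \<mu> (\<lambda>d. r0 * ?y d)"
      by (rule Bochner_Integration.integral_add[OF iD integrable_mult_right[OF iy]])
    also have "measure_pmf.expectation \<mu> (\<lambda>d. r0 * ?y d) = r0 * measure_pmf.expectation \<mu> ?y"
      by (rule integral_mult_right_zero)
    finally show ?thesis by simp
  qed
  then have "\<bar>measure_pmf.expectation \<mu> (\<lambda>d. Hs rho k (c - d))\<bar>
      \<le> r0 * \<bar>measure_pmf.expectation \<mu> ?y\<bar> + \<bar>measure_pmf.expectation \<mu> (\<lambda>d. Hs rho k (c - d) - r0 * ?y d)\<bar>"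
  proof -
    have "\<bar>r0 * measure_pmf.expectation \<mu> ?y + measure_pmf.expectation \<mu> (\<lambda>d. Hs rho k (c - d) - r0 * ?y d)\<bar>
      \<le> \<bar>r0 * measure_pmf.expectation \<mu> ?y\<bar> + \<bar>measure_pmf.expectation \<mu> (\<lambda>d. Hs rho k (c - d) - r0 * ?y d)\<bar>"
      by (rule abs_triangle_ineq)
    moreover have "\<bar>r0 * measure_pmf.expectation \<mu> ?y\<bar> = r0 * \<bar>measure_pmf.expectation \<mu> ?y\<bar>"
      using r0 by (simp add: abs_mult)
    ultimately show ?thesis using \<open>measure_pmf.expectation \<mu> (\<lambda>d. Hs rho k (c - d)) = _\<close> by simp
  qed
  also have "\<bar>measure_pmf.expectation \<mu> (\<lambda>d. Hs rho k (c - d) - r0 * ?y d)\<bar>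
      \<le> measure_pmf.expectation \<mu> (\<lambda>d. \<bar>Hs rho k (c - d) - r0 * ?y d\<bar>)"
    by (rule integral_abs_bound)
  also have "\<dots> \<le> measure_pmf.expectation \<mu> (\<lambda>d. e * \<bar>?y d\<bar> + L * Bf + Bf * ?t d)"
  proof (rule integral_mono)
    show "integrable (measure_pmf \<mu>) (\<lambda>d. \<bar>Hs rho k (c - d) - r0 * ?y d\<bar>)" using iD by (rule integrable_abs)
    show "integrable (measure_pmf \<mu>) (\<lambda>d. e * \<bar>?y d\<bar> + L * Bf + Bf * ?t d)" using iya it by simp
  qed (rule pw)
  also have "\<dots> = e * measure_pmf.expectation \<mu> (\<lambda>d. \<bar>?y d\<bar>) + L * Bf + Bf * measure_pmf.expectation \<mu> ?t"
    using iya it by simp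
  finally have main: "\<bar>measure_pmf.expectation \<mu> (\<lambda>d. Hs rho k (c - d))\<bar>
      \<le> r0 * \<bar>measure_pmf.expectation \<mu> ?y\<bar> + (e * measure_pmf.expectation \<mu> (\<lambda>d. \<bar>?y d\<bar>) + L * Bf + Bf * measure_pmf.expectation \<mu> ?t)"
    by simp
  have m1: "r0 * \<bar>measure_pmf.expectation \<mu> ?y\<bar> \<le> r0 * ((exp \<theta>2 * exp (V * \<theta>2\<^sup>2) - 1) / \<theta>2)"
    by (intro mult_left_mono mb r0) (use t2 in auto)
  have m2: "e * measure_pmf.expectation \<mu> (\<lambda>d. \<bar>?y d\<bar>) \<le> e * (2 * exp \<theta>1 * exp (V * \<theta>1\<^sup>2) / \<theta>1)"
    by (intro mult_left_mono ab(2) e) (use t1 in auto)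
  have m3: "Bf * measure_pmf.expectation \<mu> ?t \<le> Bf * (2 * exp (2 * \<theta>3) * exp (V * (2 * \<theta>3)\<^sup>2) * exp (- \<theta>3 * R) / \<theta>3)"
    by (intro mult_left_mono tb(2) B0) (use t3 in auto)
  show ?thesis using main m1 m2 m3 unfolding Bf_def by linarith
qed


lemma exp_minus_one_le: fixes x :: real assumes "0 \<le> x" shows "exp x - 1 \<le> x * exp x"
proof -
  have "1 - x \<le> exp (-x)" using exp_ge_add_one_self[of "-x"] by simp
  then have "(1 - x) * exp x \<le> exp (-x) * exp x" by (intro mult_right_mono) auto
  then show ?thesis by (simp add: exp_minus field_simps)
qed

lemma eval_mean:
  fixes n :: nat and W :: real
  assumes n: "n \<ge> 1" and W: "0 \<le> W"
  shows "(exp (1 / real n) * exp ((real n * W) * (1 / real n)\<^sup>2) - 1) / (1 / real n) \<le> (1 + W) * exp (1 + W)"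
proof -
  define x where "x = (1 + W) / real n"
  have npos: "real n > 0" using n by simp
  have x0: "0 \<le> x" unfolding x_def using W npos by simp
  have x1: "x \<le> 1 + W" unfolding x_def using W n npos by (simp add: divide_le_eq)
  have e: "exp (1 / real n) * exp ((real n * W) * (1 / real n)\<^sup>2) = exp x"
    unfolding x_def using npos by (simp add: exp_add[symmetric] power2_eq_square field_simps)
  have "(exp x - 1) / (1 / real n) = real n * (exp x - 1)" by simp
  also have "\<dots> \<le> real n * (x * exp x)" using exp_minus_one_le[OF x0] npos by simp
  also have "\<dots> = (1 + W) * exp x" unfolding x_def using npos by simp
  also have "\<dots> \<le> (1 + W) * exp (1 + W)" using x1 W by simp
  finally show ?thesis using e by simp
qed

lemma eval_abs:
  fixes n :: nat and W :: real
  assumes n: "n \<ge> 1" and W: "0 \<le> W"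
  shows "2 * exp (1 / sqrt (real n)) * exp ((real n * W) * (1 / sqrt (real n))\<^sup>2) / (1 / sqrt (real n))
     \<le> 2 * exp 1 * exp W * sqrt (real n)"
proof -
  have npos: "real n > 0" using n by simp
  have s1: "1 \<le> sqrt (real n)" using n by simp
  have a: "exp (1 / sqrt (real n)) \<le> exp 1" using s1 by (simp add: field_simps)
  have b: "(real n * W) * (1 / sqrt (real n))\<^sup>2 = W" using npos by (simp add: power_divide)
  have "2 * exp (1 / sqrt (real n)) * exp ((real n * W) * (1 / sqrt (real n))\<^sup>2) / (1 / sqrt (real n))
      = 2 * exp (1 / sqrt (real n)) * exp W * sqrt (real n)" using b by simp
  also have "\<dots> \<le> 2 * exp 1 * exp W * sqrt (real n)" using a by (intro mult_right_mono) auto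
  finally show ?thesis .
qed

lemma eval_tail:
  fixes n :: nat and W :: real
  assumes n: "n \<ge> 3" and W: "0 \<le> W" and th: "sqrt (ln (real n) / real n) \<le> 1/2"
  shows "2 * exp (2 * sqrt (ln (real n) / real n)) * exp ((real n * W) * (2 * sqrt (ln (real n) / real n))\<^sup>2)
        * exp (- sqrt (ln (real n) / real n) * ((4 * W + 1) * sqrt (real n * ln (real n)))) / sqrt (ln (real n) / real n)
     \<le> 2 * exp 1"
proof -
  define l where "l = ln (real n)"
  define \<theta> where "\<theta> = sqrt (l / real n)"
  have npos: "real n > 0" using n by simp
  have n3: "real n \<ge> 3" using n by simp
  have l1: "1 \<le> l"
  proof -
    have "exp 1 \<le> (3::real)" by (rule exp_le)
    also have "\<dots> \<le> real n" by (rule n3)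
    finally have "exp 1 \<le> real n" .
    then show ?thesis unfolding l_def using npos ln_ge_iff by blast
  qed
  have th0: "0 < \<theta>" unfolding \<theta>_def using l1 npos by simp
  have thsq: "\<theta>\<^sup>2 = l / real n" unfolding \<theta>_def using l1 npos by simp
  have thR: "\<theta> * sqrt (real n * l) = l"
  proof -
    have "\<theta> * sqrt (real n * l) = sqrt (l / real n * (real n * l))" unfolding \<theta>_def by (rule real_sqrt_mult[symmetric])
    also have "l / real n * (real n * l) = l\<^sup>2" using npos by (simp add: power2_eq_square)
    also have "sqrt (l\<^sup>2) = l" using l1 by simp
    finally show ?thesis .
  qed
  have V: "(real n * W) * (2 * \<theta>)\<^sup>2 = 4 * W * l"
  proof -
    have "(real n * W) * (2 * \<theta>)\<^sup>2 = 4 * W * (real n * \<theta>\<^sup>2)" by (simp add: power_mult_distrib)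
    also have "real n * \<theta>\<^sup>2 = l" using thsq npos by simp
    finally show ?thesis .
  qed
  have e1: "exp (2 * \<theta>) \<le> exp 1" using th unfolding \<theta>_def l_def by simp
  have nth: "1 \<le> real n * \<theta>"
  proof (rule power2_le_imp_le)
    have "(real n * \<theta>)\<^sup>2 = real n * (real n * \<theta>\<^sup>2)" by (simp add: power_mult_distrib power2_eq_square)
    also have "real n * \<theta>\<^sup>2 = l" using thsq npos by simp
    finally have "(real n * \<theta>)\<^sup>2 = real n * l" .
    moreover have "1 \<le> real n * l" using mult_mono[of 1 "real n" 1 l] n3 l1 by simp
    ultimately show "1\<^sup>2 \<le> (real n * \<theta>)\<^sup>2" by simp
    show "0 \<le> real n * \<theta>" using th0 npos by simp
  qed
  have "exp ((real n * W) * (2 * \<theta>)\<^sup>2) * exp (- \<theta> * ((4 * W + 1) * sqrt (real n * l)))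
      = exp (4 * W * l + (- ((4 * W + 1) * (\<theta> * sqrt (real n * l)))))"
    unfolding V exp_add[symmetric] by (simp add: algebra_simps)
  also have "\<dots> = exp (- l)" unfolding thR by (simp add: algebra_simps)
  also have "exp (- l) = 1 / real n" unfolding l_def using npos by (simp add: exp_minus inverse_eq_divide)
  finally have E: "exp ((real n * W) * (2 * \<theta>)\<^sup>2) * exp (- \<theta> * ((4 * W + 1) * sqrt (real n * l))) = 1 / real n" .
  have "2 * exp (2 * \<theta>) * exp ((real n * W) * (2 * \<theta>)\<^sup>2) * exp (- \<theta> * ((4 * W + 1) * sqrt (real n * l))) / \<theta>
      = 2 * exp (2 * \<theta>) * (exp ((real n * W) * (2 * \<theta>)\<^sup>2) * exp (- \<theta> * ((4 * W + 1) * sqrt (real n * l)))) / \<theta>"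
    by (simp add: mult.assoc)
  also have "\<dots> = 2 * exp (2 * \<theta>) / (real n * \<theta>)" unfolding E by simp
  also have "\<dots> \<le> 2 * exp (2 * \<theta>)"
    using nth by (simp add: divide_le_eq)
  also have "\<dots> \<le> 2 * exp 1" using e1 by simp
  finally show ?thesis unfolding \<theta>_def l_def .
qed

lemma lim2: "(\<lambda>n::nat. 1 / real n) \<longlonglongrightarrow> 0" by (rule lim_1_over_n)
lemma lim1: "(\<lambda>n::nat. 1 / sqrt (real n)) \<longlonglongrightarrow> 0"
  using tendsto_real_sqrt[OF lim2] by (simp add: real_sqrt_divide)
lemma lim3: "(\<lambda>n::nat. sqrt (ln (real n) / real n)) \<longlonglongrightarrow> 0"
  using tendsto_real_sqrt[OF lim_ln_over_n] by simp
lemma lim4: "(\<lambda>n::nat. real n powr (-1/4)) \<longlonglongrightarrow> 0"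
  by (rule tendsto_neg_powr[OF _ filterlim_real_sequentially]) simp


lemma rho_facts:
  fixes M :: "'a measure" and e :: "'a \<Rightarrow> nat"
  assumes P: "prob_space M" and meta: "e \<in> measurable M (count_space UNIV)"
    and mom: "(\<integral>\<^sup>+\<omega>. ennreal (real (e \<omega>) ^ 6) \<partial>M) \<le> ennreal C"
  shows "(\<integral>\<^sup>+\<omega>. ennreal (of_nat (e \<omega>)) \<partial>M) = ennreal (\<integral>\<omega>. real (e \<omega>) \<partial>M)"
    "0 \<le> (\<integral>\<omega>. real (e \<omega>) \<partial>M)" "(\<integral>\<omega>. real (e \<omega>) \<partial>M) \<le> 1 + max 0 C"
proof -
  interpret prob_space M by fact
  have m: "(\<lambda>\<omega>. real (e \<omega>)) \<in> borel_measurable M"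
    using measurable_compose[OF meta, of real borel] by simp
  have m6: "(\<lambda>\<omega>. ennreal (real (e \<omega>) ^ 6)) \<in> borel_measurable M" using m by measurable
  have pw: "real k \<le> 1 + real k ^ 6" for k :: nat
  proof (cases "k = 0")
    case False
    then have "real k \<le> real k ^ 6" by (intro self_le_power) auto
    then show ?thesis by linarith
  qed simp
  have "(\<integral>\<^sup>+\<omega>. ennreal (real (e \<omega>)) \<partial>M) \<le> (\<integral>\<^sup>+\<omega>. 1 + ennreal (real (e \<omega>) ^ 6) \<partial>M)"
  proof (intro nn_integral_mono)
    fix \<omega>
    have "ennreal (real (e \<omega>)) \<le> ennreal (1 + real (e \<omega>) ^ 6)" by (intro ennreal_leI pw)
    moreover have "ennreal (1 + real (e \<omega>) ^ 6) = 1 + ennreal (real (e \<omega>) ^ 6)"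
      by (subst ennreal_plus) auto
    ultimately show "ennreal (real (e \<omega>)) \<le> 1 + ennreal (real (e \<omega>) ^ 6)" by simp
  qed
  also have "\<dots> = (\<integral>\<^sup>+\<omega>. 1 \<partial>M) + (\<integral>\<^sup>+\<omega>. ennreal (real (e \<omega>) ^ 6) \<partial>M)"
    by (rule nn_integral_add) (use m6 in auto)
  also have "\<dots> \<le> 1 + ennreal C" using mom by (simp add: emeasure_space_1 add_left_mono)
  also have "\<dots> \<le> ennreal (1 + max 0 C)"
  proof -
    have "ennreal (1 + max 0 C) = 1 + ennreal (max 0 C)" by (subst ennreal_plus) auto
    moreover have "ennreal C \<le> ennreal (max 0 C)" by (intro ennreal_leI) simp
    ultimately show ?thesis by (simp add: add_left_mono)
  qed
  finally have B: "(\<integral>\<^sup>+\<omega>. ennreal (real (e \<omega>)) \<partial>M) \<le> ennreal (1 + max 0 C)" .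
  have int: "integrable M (\<lambda>\<omega>. real (e \<omega>))"
  proof (rule integrableI_bounded)
    show "(\<integral>\<^sup>+\<omega>. ennreal (norm (real (e \<omega>))) \<partial>M) < \<infinity>" using B by (simp add: order.strict_trans1)
  qed (rule m)
  show eq: "(\<integral>\<^sup>+\<omega>. ennreal (of_nat (e \<omega>)) \<partial>M) = ennreal (\<integral>\<omega>. real (e \<omega>) \<partial>M)"
    by (rule nn_integral_eq_integral[OF int]) auto
  show "0 \<le> (\<integral>\<omega>. real (e \<omega>) \<partial>M)" by (intro integral_nonneg_AE) auto
  have "ennreal (\<integral>\<omega>. real (e \<omega>) \<partial>M) \<le> ennreal (1 + max 0 C)" using B eq by simp
  then show "(\<integral>\<omega>. real (e \<omega>) \<partial>M) \<le> 1 + max 0 C" by (subst (asm) ennreal_le_iff) auto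
qed


theorem lemma4p6:
  fixes p :: "int pmf" and \<delta> :: real and ybar :: real and T :: real
    and M :: "nat \<Rightarrow> 'a measure"
    and eta :: "nat \<Rightarrow> int \<Rightarrow> 'a \<Rightarrow> nat"
    and X :: "nat \<Rightarrow> int \<Rightarrow> nat \<Rightarrow> 'a \<Rightarrow> real \<Rightarrow> int"
    and rho0 v0 :: "real \<Rightarrow> real" and L :: "nat \<Rightarrow> nat"
  defines "b \<equiv> (\<Sum>\<^sub>\<infinity>x\<in>UNIV. real_of_int x * pmf p x)"
  defines "rho \<equiv> (\<lambda>n x. \<integral>\<omega>. real (eta n x \<omega>) \<partial>M n)"
  defines "v \<equiv> (\<lambda>n x. \<integral>\<omega>. (real (eta n x \<omega>) - rho n x)\<^sup>2 \<partial>M n)"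
  assumes A_delta: "\<delta> > 0"
    and A_mgf: "\<And>\<theta>. \<bar>\<theta>\<bar> \<le> \<delta> \<Longrightarrow> (\<lambda>x. exp (\<theta> * real_of_int x) * pmf p x) summable_on UNIV"
    and prob: "\<And>n. prob_space (M n)"
    and walks: "\<And>n x i. is_crw (M n) p x (X n x i)"
    and indep: "\<And>n. system_indep (M n) (eta n) (X n)"
    and moments: "\<exists>C::real. \<forall>n x. (\<integral>\<^sup>+\<omega>. ennreal (real (eta n x \<omega>) ^ 6) \<partial>M n) \<le> ennreal C"
    and rho0_bdd: "bounded (range rho0)" and rho0_nonneg: "\<And>y. rho0 y \<ge> 0"
    and v0_bdd: "bounded (range v0)" and v0_nonneg: "\<And>y. v0 y \<ge> 0"
    and L_pos: "\<And>n. L n > 0"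
    and L_lim: "(\<lambda>n. real n powr (-1/4) * real (L n)) \<longlonglongrightarrow> 0"
    and rho_avg: "\<And>A::real. \<And>\<epsilon>. \<epsilon> > 0 \<Longrightarrow> eventually (\<lambda>n. \<forall>m::int.
        \<bar>real_of_int m\<bar> \<le> A * sqrt (real n * ln (real n)) \<longrightarrow>
        real n powr (1/4) * \<bar>(\<Sum>j=1..L n. rho n (\<lfloor>real n * ybar\<rfloor> + m + int j)) / real (L n)
            - rho0 ybar\<bar> \<le> \<epsilon>) sequentially"
    and v_avg: "\<And>A::real. \<And>\<epsilon>. \<epsilon> > 0 \<Longrightarrow> eventually (\<lambda>n. \<forall>m::int.
        \<bar>real_of_int m\<bar> \<le> A * sqrt (real n * ln (real n)) \<longrightarrow>
        real n powr (1/4) * \<bar>(\<Sum>j=1..L n. v n (\<lfloor>real n * ybar\<rfloor> + m + int j)) / real (L n)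
            - v0 ybar\<bar> \<le> \<epsilon>) sequentially"
    and T_pos: "0 < T"
  shows "\<forall>\<epsilon>>0. eventually (\<lambda>n. \<forall>t\<in>{0..T}.
      real n powr (-1/4) *
        \<bar>enn2real (\<integral>\<^sup>+\<omega>. Y1 (eta n) (X n) b ybar n t \<omega> \<partial>M n)
         - enn2real (\<integral>\<^sup>+\<omega>. Y2 (eta n) (X n) b ybar n t \<omega> \<partial>M n)\<bar> \<le> \<epsilon>) sequentially"
proof (intro allI impI)
  fix \<epsilon> :: real assume \<epsilon>: "\<epsilon> > 0"
  obtain C where C: "\<And>n x. (\<integral>\<^sup>+\<omega>. ennreal (real (eta n x \<omega>) ^ 6) \<partial>M n) \<le> ennreal C"
    using moments by blast
  define Rb where "Rb = 1 + max 0 C"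
  have meta: "\<And>n x. eta n x \<in> measurable (M n) (count_space UNIV)"
    using indep unfolding system_indep_def by blast
  note RF = rho_facts[OF prob meta C]
  have rhoeq: "\<And>n x. (\<integral>\<^sup>+\<omega>. ennreal (of_nat (eta n x \<omega>)) \<partial>M n) = ennreal (rho n x)"
    using RF(1) unfolding rho_def by simp
  have rho_nn: "\<And>n x. 0 \<le> rho n x" using RF(2) unfolding rho_def by simp
  have rho_le: "\<And>n x. rho n x \<le> Rb" using RF(3) unfolding rho_def Rb_def by simp
  define K where "K = Kp p \<delta>"
  have K0: "0 \<le> K" unfolding K_def by (rule Kp_nonneg[OF A_delta A_mgf])
  define bE where "bE = measure_pmf.expectation p real_of_int"
  have bb: "b = bE" unfolding b_def bE_def by (rule b_eq[OF A_delta A_mgf])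
  define r0 where "r0 = rho0 ybar"
  have r0: "0 \<le> r0" unfolding r0_def by (rule rho0_nonneg)
  define W where "W = T * K"
  have W0: "0 \<le> W" unfolding W_def using T_pos K0 by simp
  define A where "A = 4 * W + 1"
  define Cy where "Cy = 2 * exp 1 * exp W"
  have Cy0: "0 < Cy" unfolding Cy_def by simp
  define Cm where "Cm = (1 + W) * exp (1 + W)"
  define Ct where "Ct = 2 * exp (1::real)"
  define Bf where "Bf = Rb + r0"
  have Rb0: "0 \<le> Rb" unfolding Rb_def by simp
  have Bf0: "0 \<le> Bf" unfolding Bf_def using Rb0 r0 by simp
  define \<epsilon>' where "\<epsilon>' = \<epsilon> / (2 * (Cy + 1))"
  have \<epsilon>'0: "0 < \<epsilon>'" unfolding \<epsilon>'_def using \<epsilon> Cy0 by simp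
  have ev_block: "eventually (\<lambda>n. \<forall>m::int.
        \<bar>real_of_int m\<bar> \<le> A * sqrt (real n * ln (real n)) \<longrightarrow>
        real n powr (1/4) * \<bar>(\<Sum>j=1..L n. rho n (\<lfloor>real n * ybar\<rfloor> + m + int j)) / real (L n)
            - r0\<bar> \<le> \<epsilon>') sequentially"
    unfolding r0_def by (rule rho_avg[OF \<epsilon>'0])
  have ev1: "eventually (\<lambda>n. 3 \<le> n) sequentially" by (rule eventually_ge_at_top)
  have ev2: "eventually (\<lambda>n. 1 / sqrt (real n) < \<delta> / 2) sequentially"
    by (rule order_tendstoD(2)[OF lim1]) (use A_delta in simp)
  have ev3: "eventually (\<lambda>n. 1 / real n < \<delta> / 2) sequentially"
    by (rule order_tendstoD(2)[OF lim2]) (use A_delta in simp)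
  have ev4: "eventually (\<lambda>n. sqrt (ln (real n) / real n) < \<delta> / 4) sequentially"
    by (rule order_tendstoD(2)[OF lim3]) (use A_delta in simp)
  have ev5: "eventually (\<lambda>n. sqrt (ln (real n) / real n) < 1 / 2) sequentially"
    by (rule order_tendstoD(2)[OF lim3]) simp
  have lim6: "(\<lambda>n. real n powr (-1/4) * (r0 * Cm + Bf * Ct) + Bf * (real n powr (-1/4) * real (L n))) \<longlonglongrightarrow> 0 * (r0 * Cm + Bf * Ct) + Bf * 0"
    by (intro tendsto_intros lim4 L_lim)
  have ev6: "eventually (\<lambda>n. real n powr (-1/4) * (r0 * Cm + Bf * Ct) + Bf * (real n powr (-1/4) * real (L n)) < \<epsilon> / 2) sequentially"
    by (rule order_tendstoD(2)[OF lim6]) (use \<epsilon> in simp)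
  show "eventually (\<lambda>n. \<forall>t\<in>{0..T}.
      real n powr (-1/4) *
        \<bar>enn2real (\<integral>\<^sup>+\<omega>. Y1 (eta n) (X n) b ybar n t \<omega> \<partial>M n)
         - enn2real (\<integral>\<^sup>+\<omega>. Y2 (eta n) (X n) b ybar n t \<omega> \<partial>M n)\<bar> \<le> \<epsilon>) sequentially"
    using ev_block ev1 ev2 ev3 ev4 ev5 ev6
  proof eventually_elim
    case (elim n)
    note blk = elim(1) and n3 = elim(2) and e2 = elim(3) and e3 = elim(4) and e4 = elim(5) and e5 = elim(6) and e6 = elim(7)
    have npos: "0 < real n" using n3 by simp
    show ?case
    proof
      fix t assume t: "t \<in> {0..T}"
      define s where "s = real n * t"
      define k where "k = \<lfloor>real n * ybar\<rfloor>"
      define c where "c = \<lfloor>real n * b * t\<rfloor>"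
      define V where "V = real n * W"
      define e where "e = \<epsilon>' * real n powr (-1/4)"
      define R where "R = A * sqrt (real n * ln (real n))"
      let ?\<mu> = "crw_pmf p s"
      have s0: "0 \<le> s" unfolding s_def using t by simp
      have sT: "s \<le> real n * T" unfolding s_def using t npos by simp
      have V0: "0 \<le> V" unfolding V_def using W0 by simp
      have e0: "0 \<le> e" unfolding e_def using \<epsilon>'0 by simp
      have R0: "0 \<le> R" unfolding R_def A_def using W0 n3 by (intro mult_nonneg_nonneg) auto
      have cm: "\<bar>real_of_int c - s * bE\<bar> \<le> 1"
      proof -
        have "s * bE = real n * b * t" unfolding s_def bb by simp
        then show ?thesis unfolding c_def by linarith
      qed
      have mgfb: "(\<integral>\<^sup>+d. ennreal (exp (\<theta> * (real_of_int d - s * bE))) \<partial>measure_pmf ?\<mu>) \<le> ennreal (exp (V * \<theta>\<^sup>2))"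
        if th: "\<bar>\<theta>\<bar> \<le> \<delta> / 2" for \<theta>
      proof -
        have "(\<integral>\<^sup>+d. ennreal (exp (\<theta> * (real_of_int d - s * bE))) \<partial>measure_pmf ?\<mu>) \<le> ennreal (exp (s * K * \<theta>\<^sup>2))"
          unfolding bE_def K_def by (rule crw_bound[OF A_delta A_mgf s0 th])
        also have "\<dots> \<le> ennreal (exp (V * \<theta>\<^sup>2))"
        proof (intro ennreal_leI, simp)
          have "s * K \<le> real n * T * K" using sT K0 by (intro mult_right_mono) auto
          then have "s * K * \<theta>\<^sup>2 \<le> real n * T * K * \<theta>\<^sup>2" by (rule mult_right_mono) simp
          then show "s * K * \<theta>\<^sup>2 \<le> V * \<theta>\<^sup>2" unfolding V_def W_def by (simp add: mult_ac)
        qed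
        finally show ?thesis .
      qed
      have th1: "0 < 1 / sqrt (real n)" "1 / sqrt (real n) \<le> \<delta> / 2" using npos e2 by auto
      have th2: "0 < 1 / real n" "1 / real n \<le> \<delta> / 2" using npos e3 by auto
      have ln1: "0 < ln (real n)" using n3 by simp
      have th3: "0 < sqrt (ln (real n) / real n)" "2 * sqrt (ln (real n) / real n) \<le> \<delta> / 2"
        using ln1 npos e4 by auto
      have iy: "integrable (measure_pmf ?\<mu>) (\<lambda>d. \<bar>real_of_int (c - d)\<bar>)"
        using absy_bound(1)[OF cm V0 mgfb th1] .
      have hyp: "\<bar>\<Sum>j=1..L n. rho n (k + mm + int j) - r0\<bar> \<le> e * real (L n)"
        if mm: "\<bar>real_of_int mm\<bar> \<le> R" for mm
      proof -
        let ?S = "\<Sum>j=1..L n. rho n (k + mm + int j)"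
        have Lp: "0 < real (L n)" using L_pos[of n] by simp
        have q0: "real n powr (1/4) * \<bar>?S / real (L n) - r0\<bar> \<le> \<epsilon>'"
          using blk[rule_format, OF mm[unfolded R_def]] unfolding k_def .
        have p4: "0 < real n powr (1/4)" using npos by simp
        have q: "\<bar>?S / real (L n) - r0\<bar> \<le> \<epsilon>' * real n powr (-1/4)"
        proof -
          have i: "real n powr (1/4) * real n powr (-1/4) = 1"
            using npos by (simp only: powr_add[symmetric]) simp
          have "\<bar>?S / real (L n) - r0\<bar> = (real n powr (1/4) * \<bar>?S / real (L n) - r0\<bar>) * real n powr (-1/4)"
            using i by (simp only: mult.commute mult.left_commute) simp
          also have "\<dots> \<le> \<epsilon>' * real n powr (-1/4)"
            using q0 by (rule mult_right_mono) simp
          finally show ?thesis .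
        qed
        have s1: "(\<Sum>j=1..L n. rho n (k + mm + int j) - r0) = ?S - real (L n) * r0"
          by (simp add: sum_subtractf)
        have s2: "?S - real (L n) * r0 = real (L n) * (?S / real (L n) - r0)"
          using Lp by (simp add: right_diff_distrib)
        have "\<bar>\<Sum>j=1..L n. rho n (k + mm + int j) - r0\<bar> = real (L n) * \<bar>?S / real (L n) - r0\<bar>"
          unfolding s1 s2 using Lp by (simp add: abs_mult)
        also have "\<dots> \<le> real (L n) * (\<epsilon>' * real n powr (-1/4))" using q Lp by (intro mult_left_mono) auto
        finally show ?thesis unfolding e_def by (simp add: mult_ac)
      qed
      have Y1e: "Y1 (eta n) (X n) b ybar n t = particle_count (eta n) (X n) (\<lambda>a c'. a \<ge> k + 1 \<and> c' \<le> k + c) s"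
        unfolding Y1_def k_def c_def s_def ..
      have Y2e: "Y2 (eta n) (X n) b ybar n t = particle_count (eta n) (X n) (\<lambda>a c'. a \<le> k \<and> c' > k + c) s"
        unfolding Y2_def k_def c_def s_def ..
      have diff: "enn2real (\<integral>\<^sup>+\<omega>. Y1 (eta n) (X n) b ybar n t \<omega> \<partial>M n)
         - enn2real (\<integral>\<^sup>+\<omega>. Y2 (eta n) (X n) b ybar n t \<omega> \<partial>M n)
         = measure_pmf.expectation ?\<mu> (\<lambda>d. Hs (rho n) k (c - d))"
        unfolding Y1e Y2e
        by (rule EY_diff[OF prob walks indep s0 rhoeq rho_nn rho_le iy])
      have core: "\<bar>measure_pmf.expectation ?\<mu> (\<lambda>d. Hs (rho n) k (c - d))\<bar>
         \<le> r0 * ((exp (1 / real n) * exp (V * (1 / real n)\<^sup>2) - 1) / (1 / real n))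
           + e * (2 * exp (1 / sqrt (real n)) * exp (V * (1 / sqrt (real n))\<^sup>2) / (1 / sqrt (real n)))
           + real (L n) * (Rb + r0)
           + (Rb + r0) * (2 * exp (2 * sqrt (ln (real n) / real n)) * exp (V * (2 * sqrt (ln (real n) / real n))\<^sup>2)
               * exp (- sqrt (ln (real n) / real n) * R) / sqrt (ln (real n) / real n))"
        by (rule core_bound[OF cm V0 mgfb rho_nn rho_le r0 L_pos e0 R0 hyp th1 th2 th3])
      have b1: "(exp (1 / real n) * exp (V * (1 / real n)\<^sup>2) - 1) / (1 / real n) \<le> Cm"
        unfolding V_def Cm_def by (rule eval_mean) (use n3 W0 in auto)
      have b2: "2 * exp (1 / sqrt (real n)) * exp (V * (1 / sqrt (real n))\<^sup>2) / (1 / sqrt (real n)) \<le> Cy * sqrt (real n)"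
        unfolding V_def Cy_def by (rule eval_abs) (use n3 W0 in auto)
      have b3: "2 * exp (2 * sqrt (ln (real n) / real n)) * exp (V * (2 * sqrt (ln (real n) / real n))\<^sup>2)
               * exp (- sqrt (ln (real n) / real n) * R) / sqrt (ln (real n) / real n) \<le> Ct"
        unfolding V_def Ct_def R_def A_def by (rule eval_tail) (use n3 W0 e5 in auto)
      have tot: "\<bar>measure_pmf.expectation ?\<mu> (\<lambda>d. Hs (rho n) k (c - d))\<bar>
          \<le> r0 * Cm + e * (Cy * sqrt (real n)) + real (L n) * Bf + Bf * Ct"
      proof -
        have "r0 * ((exp (1 / real n) * exp (V * (1 / real n)\<^sup>2) - 1) / (1 / real n)) \<le> r0 * Cm"
          using b1 r0 by (rule mult_left_mono)
        moreover have "e * (2 * exp (1 / sqrt (real n)) * exp (V * (1 / sqrt (real n))\<^sup>2) / (1 / sqrt (real n))) \<le> e * (Cy * sqrt (real n))"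
          using b2 e0 by (rule mult_left_mono)
        moreover have "(Rb + r0) * (2 * exp (2 * sqrt (ln (real n) / real n)) * exp (V * (2 * sqrt (ln (real n) / real n))\<^sup>2)
               * exp (- sqrt (ln (real n) / real n) * R) / sqrt (ln (real n) / real n)) \<le> Bf * Ct"
          unfolding Bf_def using b3 Bf0[unfolded Bf_def] by (rule mult_left_mono)
        ultimately show ?thesis using core unfolding Bf_def by linarith
      qed
      define N4 where "N4 = real n powr (-1/4)"
      have N40: "0 \<le> N4" unfolding N4_def by simp
      have NN: "N4 * (e * (Cy * sqrt (real n))) = \<epsilon>' * Cy"
      proof -
        have "N4 * N4 * sqrt (real n) = 1"
        proof -
          have "N4 * N4 * sqrt (real n) = real n powr (-1/4) * real n powr (-1/4) * real n powr (1/2)"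
            unfolding N4_def using npos by (simp add: powr_half_sqrt)
          also have "\<dots> = real n powr (-1/4 + -1/4 + 1/2)" by (simp only: powr_add[symmetric])
          also have "\<dots> = 1" using npos by simp
          finally show ?thesis .
        qed
        then show ?thesis unfolding e_def N4_def[symmetric] by (simp add: mult_ac)
      qed
      have "N4 * \<bar>measure_pmf.expectation ?\<mu> (\<lambda>d. Hs (rho n) k (c - d))\<bar>
          \<le> N4 * (r0 * Cm + e * (Cy * sqrt (real n)) + real (L n) * Bf + Bf * Ct)"
        using tot N40 by (rule mult_left_mono)
      also have "\<dots> = (N4 * (r0 * Cm + Bf * Ct) + Bf * (N4 * real (L n))) + N4 * (e * (Cy * sqrt (real n)))"
        by (simp add: algebra_simps)
      also have "\<dots> \<le> \<epsilon> / 2 + \<epsilon>' * Cy"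
        using e6 NN[unfolded N4_def] unfolding N4_def by linarith
      also have "\<epsilon>' * Cy \<le> \<epsilon> / 2"
      proof -
        have "\<epsilon>' * Cy = \<epsilon> / 2 * (Cy / (Cy + 1))" unfolding \<epsilon>'_def by (simp add: field_simps)
        also have "\<dots> \<le> \<epsilon> / 2 * 1" using Cy0 \<epsilon> by (intro mult_left_mono) auto
        finally show ?thesis by simp
      qed
      finally have "N4 * \<bar>measure_pmf.expectation ?\<mu> (\<lambda>d. Hs (rho n) k (c - d))\<bar> \<le> \<epsilon>" by simp
      then show "real n powr (-1/4) *
        \<bar>enn2real (\<integral>\<^sup>+\<omega>. Y1 (eta n) (X n) b ybar n t \<omega> \<partial>M n)
         - enn2real (\<integral>\<^sup>+\<omega>. Y2 (eta n) (X n) b ybar n t \<omega> \<partial>M n)\<bar> \<le> \<epsilon>"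
        unfolding diff N4_def .
    qed
  qed
qed


end
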